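(* Let $\omega$ be a rectilinearly-convex obstacle that does not have a diagonal. If $\omega$ has a cross $X$, then $X$ is a minimum skeleton for $\omega$.
   Context: An obstacle $\omega$ is a simple polygon in $\mathbb{R}^2$ (a closed, bounded polygonal region without holes whose boundary does not intersect itself), assumed in general position (no three of its vertices are collinear); vertices and edges of $\omega$ are those of its boundary. $\omega$ is rectilinear if each edge is horizontal or vertical, and a rectilinear obstacle is rectilinearly-convex if any two points of $\omega$ can be joined by a shortest rectilinear path (made of horizontal and vertical segments, of minimum $\ell_1$ length) contained in $\omega$. A corner point of a rectilinear path is a point where a horizontal and a vertical segment of the path meet. A set $S$ of closed line segments is inside $\omega$ if the union of its elements is contained in $\omega$. Such an $S$ is a skeleton for $\omega$ if for every pair of points $p,q$ not in the interior of $\omega$ such that every shortest rectilinear path between $p$ and $q$ with at most one corner point meets the interior of $\omega$, each such path intersects some element of $S$; a minimum skeleton is one with the fewest segments. $B(\omega)$ is the smallest closed axis-parallel rectangle containing $\omega$; the extreme edges are the edges of $\omega$ lying on the boundary of $B(\omega)$ (exactly four: left, right, bottom, top); an extreme corner is a vertex of $\omega$ that is a common endpoint of two extreme edges. A diagonal of $\omega$ is a line segment contained in $\omega$ joining two diagonally opposite extreme corners. A cross of $\omega$ is a pair $\{s_H,s_V\}$ of line segments contained in $\omega$, where $s_H$ has one endpoint on each of the two horizontal extreme edges and $s_V$ has one endpoint on each of the two vertical extreme edges. *)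

theory Defs
  imports "HOL-Analysis.Analysis"
begin

type_synonym pt = "real \<times> real"

definition nxt :: "pt list \<Rightarrow> nat \<Rightarrow> nat" where
  "nxt vs i = Suc i mod length vs"

definition edges :: "pt list \<Rightarrow> (pt \<times> pt) set" where
  "edges vs = {(vs ! i, vs ! nxt vs i) | i. i < length vs}"

definition seg :: "pt \<times> pt \<Rightarrow> pt set" where
  "seg e = closed_segment (fst e) (snd e)"

definition poly_boundary :: "pt list \<Rightarrow> pt set" where
  "poly_boundary vs = (\<Union>e\<in>edges vs. seg e)"

definition simple_polygon :: "pt list \<Rightarrow> bool" where
  "simple_polygon vs \<longleftrightarrow> length vs \<ge> 3 \<and> distinct vs \<and>
     (\<forall>i<length vs. \<forall>j<length vs. i \<noteq> j \<longrightarrow>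
        (if j = nxt vs i then
           closed_segment (vs!i) (vs!nxt vs i) \<inter> closed_segment (vs!j) (vs!nxt vs j) = {vs!j}
         else if i = nxt vs j then
           closed_segment (vs!i) (vs!nxt vs i) \<inter> closed_segment (vs!j) (vs!nxt vs j) = {vs!i}
         else closed_segment (vs!i) (vs!nxt vs i) \<inter> closed_segment (vs!j) (vs!nxt vs j) = {}))"

definition region :: "pt list \<Rightarrow> pt set" where
  "region vs = poly_boundary vs \<union>
     {x. x \<notin> poly_boundary vs \<and> bounded (connected_component_set (- poly_boundary vs) x)}"

definition general_position :: "pt list \<Rightarrow> bool" where
  "general_position vs \<longleftrightarrow>
     (\<forall>a\<in>set vs. \<forall>b\<in>set vs. \<forall>c\<in>set vs. a \<noteq> b \<and> a \<noteq> c \<and> b \<noteq> c \<longrightarrow> \<not> collinear {a, b, c})"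

definition rectilinear :: "pt list \<Rightarrow> bool" where
  "rectilinear vs \<longleftrightarrow> (\<forall>e\<in>edges vs. fst (fst e) = fst (snd e) \<or> snd (fst e) = snd (snd e))"

definition l1 :: "pt \<Rightarrow> pt \<Rightarrow> real" where
  "l1 a b = \<bar>fst a - fst b\<bar> + \<bar>snd a - snd b\<bar>"

definition rect_path :: "pt list \<Rightarrow> bool" where
  "rect_path ps \<longleftrightarrow> ps \<noteq> [] \<and>
     (\<forall>i. Suc i < length ps \<longrightarrow> ps!i \<noteq> ps!Suc i \<and>
        (fst (ps!i) = fst (ps!Suc i) \<or> snd (ps!i) = snd (ps!Suc i)))"

definition path_set :: "pt list \<Rightarrow> pt set" where
  "path_set ps = set ps \<union> (\<Union>i\<in>{i. Suc i < length ps}. closed_segment (ps!i) (ps!Suc i))"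

definition path_len :: "pt list \<Rightarrow> real" where
  "path_len ps = (\<Sum>i\<in>{i. Suc i < length ps}. l1 (ps!i) (ps!Suc i))"

definition shortest_rect_path :: "pt \<Rightarrow> pt \<Rightarrow> pt list \<Rightarrow> bool" where
  "shortest_rect_path p q ps \<longleftrightarrow> rect_path ps \<and> hd ps = p \<and> last ps = q \<and>
     (\<forall>ps'. rect_path ps' \<and> hd ps' = p \<and> last ps' = q \<longrightarrow> path_len ps \<le> path_len ps')"

definition horiz :: "pt \<Rightarrow> pt \<Rightarrow> bool" where
  "horiz a b \<longleftrightarrow> a \<noteq> b \<and> snd a = snd b"

definition vert :: "pt \<Rightarrow> pt \<Rightarrow> bool" where
  "vert a b \<longleftrightarrow> a \<noteq> b \<and> fst a = fst b"

definition corners :: "pt list \<Rightarrow> pt set" where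
  "corners ps = {ps!Suc i | i. Suc (Suc i) < length ps \<and>
      ((horiz (ps!i) (ps!Suc i) \<and> vert (ps!Suc i) (ps!Suc (Suc i))) \<or>
       (vert (ps!i) (ps!Suc i) \<and> horiz (ps!Suc i) (ps!Suc (Suc i))))}"

definition rect_convex :: "pt set \<Rightarrow> bool" where
  "rect_convex \<omega> \<longleftrightarrow> (\<forall>p\<in>\<omega>. \<forall>q\<in>\<omega>. \<exists>ps. shortest_rect_path p q ps \<and> path_set ps \<subseteq> \<omega>)"

definition is_segment :: "pt set \<Rightarrow> bool" where
  "is_segment s \<longleftrightarrow> (\<exists>a b. a \<noteq> b \<and> s = closed_segment a b)"

definition short1 :: "pt \<Rightarrow> pt \<Rightarrow> pt list \<Rightarrow> bool" where
  "short1 p q ps \<longleftrightarrow> shortest_rect_path p q ps \<and> card (corners ps) \<le> 1"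

definition skeleton :: "pt set \<Rightarrow> pt set set \<Rightarrow> bool" where
  "skeleton \<omega> S \<longleftrightarrow> (\<forall>s\<in>S. is_segment s) \<and> \<Union>S \<subseteq> \<omega> \<and>
     (\<forall>p q. p \<notin> interior \<omega> \<and> q \<notin> interior \<omega> \<and>
        (\<forall>ps. short1 p q ps \<longrightarrow> path_set ps \<inter> interior \<omega> \<noteq> {}) \<longrightarrow>
        (\<forall>ps. short1 p q ps \<longrightarrow> (\<exists>s\<in>S. path_set ps \<inter> s \<noteq> {})))"

definition min_skeleton :: "pt set \<Rightarrow> pt set set \<Rightarrow> bool" where
  "min_skeleton \<omega> S \<longleftrightarrow> skeleton \<omega> S \<and> finite S \<and>
     (\<forall>S'. skeleton \<omega> S' \<and> finite S' \<longrightarrow> card S \<le> card S')"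

definition xmin :: "pt list \<Rightarrow> real" where "xmin vs = Min (fst ` set vs)"
definition xmax :: "pt list \<Rightarrow> real" where "xmax vs = Max (fst ` set vs)"
definition ymin :: "pt list \<Rightarrow> real" where "ymin vs = Min (snd ` set vs)"
definition ymax :: "pt list \<Rightarrow> real" where "ymax vs = Max (snd ` set vs)"

definition left_edge :: "pt list \<Rightarrow> pt \<times> pt \<Rightarrow> bool" where
  "left_edge vs e \<longleftrightarrow> e \<in> edges vs \<and> seg e \<subseteq> {p. fst p = xmin vs}"
definition right_edge :: "pt list \<Rightarrow> pt \<times> pt \<Rightarrow> bool" where
  "right_edge vs e \<longleftrightarrow> e \<in> edges vs \<and> seg e \<subseteq> {p. fst p = xmax vs}"
definition bottom_edge :: "pt list \<Rightarrow> pt \<times> pt \<Rightarrow> bool" where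
  "bottom_edge vs e \<longleftrightarrow> e \<in> edges vs \<and> seg e \<subseteq> {p. snd p = ymin vs}"
definition top_edge :: "pt list \<Rightarrow> pt \<times> pt \<Rightarrow> bool" where
  "top_edge vs e \<longleftrightarrow> e \<in> edges vs \<and> seg e \<subseteq> {p. snd p = ymax vs}"

definition endpoint_of :: "pt \<Rightarrow> pt \<times> pt \<Rightarrow> bool" where
  "endpoint_of v e \<longleftrightarrow> v = fst e \<or> v = snd e"

definition corner_of :: "pt list \<Rightarrow> (pt list \<Rightarrow> pt \<times> pt \<Rightarrow> bool) \<Rightarrow>
    (pt list \<Rightarrow> pt \<times> pt \<Rightarrow> bool) \<Rightarrow> pt \<Rightarrow> bool" where
  "corner_of vs E1 E2 v \<longleftrightarrow> v \<in> set vs \<and>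
     (\<exists>e1 e2. E1 vs e1 \<and> E2 vs e2 \<and> endpoint_of v e1 \<and> endpoint_of v e2)"

definition has_diagonal :: "pt list \<Rightarrow> bool" where
  "has_diagonal vs \<longleftrightarrow> (\<exists>v w.
     ((corner_of vs left_edge bottom_edge v \<and> corner_of vs right_edge top_edge w) \<or>
      (corner_of vs right_edge bottom_edge v \<and> corner_of vs left_edge top_edge w)) \<and>
     closed_segment v w \<subseteq> region vs)"

definition is_cross :: "pt list \<Rightarrow> pt \<Rightarrow> pt \<Rightarrow> pt \<Rightarrow> pt \<Rightarrow> bool" where
  "is_cross vs a b c d \<longleftrightarrow>
     closed_segment a b \<subseteq> region vs \<and> closed_segment c d \<subseteq> region vs \<and>
     ((\<exists>e. bottom_edge vs e \<and> a \<in> seg e) \<and> (\<exists>e. top_edge vs e \<and> b \<in> seg e)) \<and>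
     ((\<exists>e. left_edge vs e \<and> c \<in> seg e) \<and> (\<exists>e. right_edge vs e \<and> d \<in> seg e))"

end

theory Submission
  imports Defs "HOL-Analysis.Analysis"
begin

lemma l1_nonneg: "0 \<le> l1 a b" by (simp add: l1_def)
lemma l1_sym: "l1 a b = l1 b a" by (simp add: l1_def abs_minus_commute)
lemma l1_self[simp]: "l1 a a = 0" by (simp add: l1_def)
lemma l1_tri: "l1 a c \<le> l1 a b + l1 b c"
  unfolding l1_def using abs_triangle_ineq[of "fst a - fst b" "fst b - fst c"]
    abs_triangle_ineq[of "snd a - snd b" "snd b - snd c"] by simp
lemma l1_pos: "a \<noteq> b \<Longrightarrow> 0 < l1 a b"
  unfolding l1_def by (cases a; cases b) auto

lemma l1_seg: assumes "z \<in> closed_segment x y" shows "l1 x z + l1 z y = l1 x y"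
proof -
  obtain u where u: "0 \<le> u" "u \<le> 1" "z = (1 - u) *\<^sub>R x + u *\<^sub>R y"
    using assms by (auto simp: closed_segment_def)
  have z: "fst z = (1-u) * fst x + u * fst y" "snd z = (1-u) * snd x + u * snd y" using u(3) by auto
  have 1: "fst x - fst z = u * (fst x - fst y)" "fst z - fst y = (1 - u) * (fst x - fst y)"
    "snd x - snd z = u * (snd x - snd y)" "snd z - snd y = (1 - u) * (snd x - snd y)"
    unfolding z by (auto simp: algebra_simps)
  show ?thesis unfolding l1_def 1 abs_mult using u by (simp add: algebra_simps)
qed

lemma l1_between: assumes "l1 p z + l1 z q \<le> l1 p q"
  shows "fst z \<in> closed_segment (fst p) (fst q) \<and> snd z \<in> closed_segment (snd p) (snd q)"
  using assms unfolding l1_def closed_segment_eq_real_ivl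
  by (auto split: if_splits abs_split)

lemma path_len_sum: "path_len ps = (\<Sum>i<length ps - 1. l1 (ps!i) (ps!Suc i))"
proof -
  have "{i. Suc i < length ps} = {..<length ps - 1}" by auto
  then show ?thesis by (simp add: path_len_def)
qed

lemma partial_len: "a \<le> b \<Longrightarrow> b < length ps \<Longrightarrow> l1 (ps!a) (ps!b) \<le> (\<Sum>i\<in>{a..<b}. l1 (ps!i) (ps!Suc i))"
proof (induction b)
  case 0 then show ?case by simp
next
  case (Suc b)
  show ?case
  proof (cases "a = Suc b")
    case True then show ?thesis by simp
  next
    case False
    then have "a \<le> b" using Suc by simp
    then have "l1 (ps!a) (ps!b) \<le> (\<Sum>i\<in>{a..<b}. l1 (ps!i) (ps!Suc i))" using Suc by simp
    moreover have "(\<Sum>i\<in>{a..<Suc b}. l1 (ps!i) (ps!Suc i)) = (\<Sum>i\<in>{a..<b}. l1 (ps!i) (ps!Suc i)) + l1 (ps!b) (ps!Suc b)"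
      using \<open>a \<le> b\<close> by simp
    ultimately show ?thesis using l1_tri[of "ps!a" "ps!Suc b" "ps!b"] by simp
  qed
qed

lemma sum_split3: "a \<le> b \<Longrightarrow> b \<le> N \<Longrightarrow> (\<Sum>i<N. f i) = (\<Sum>i\<in>{0..<a}. f i) + (\<Sum>i\<in>{a..<b}. f i) + (\<Sum>i\<in>{b..<N}. f i)"
  for f :: "nat \<Rightarrow> real"
  by (metis atLeast0LessThan le0 sum.atLeastLessThan_concat)

lemma box_len: assumes "ps \<noteq> []" "z \<in> path_set ps"
  shows "l1 (hd ps) z + l1 z (last ps) \<le> path_len ps"
proof -
  let ?f = "\<lambda>i. l1 (ps!i) (ps!Suc i)"
  let ?N = "length ps - 1"
  have hd: "hd ps = ps!0" and la: "last ps = ps!?N" using assms by (auto simp: hd_conv_nth last_conv_nth)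
  from assms(2) consider (v) i where "i < length ps" "z = ps!i"
    | (s) i where "Suc i < length ps" "z \<in> closed_segment (ps!i) (ps!Suc i)"
    unfolding path_set_def by (auto simp: in_set_conv_nth)
  then show ?thesis
  proof cases
    case v
    have "l1 (ps!0) (ps!i) \<le> sum ?f {0..<i}" using partial_len[of 0 i ps] v by simp
    moreover have "l1 (ps!i) (ps!?N) \<le> sum ?f {i..<?N}" using partial_len[of i ?N ps] v assms by simp
    moreover have "path_len ps = sum ?f {0..<i} + sum ?f {i..<i} + sum ?f {i..<?N}"
      unfolding path_len_sum using v by (intro sum_split3) auto
    ultimately show ?thesis using v hd la by simp
  next
    case s
    have "l1 (ps!0) (ps!i) \<le> sum ?f {0..<i}" using partial_len[of 0 i ps] s by simp
    moreover have "l1 (ps!Suc i) (ps!?N) \<le> sum ?f {Suc i..<?N}" using partial_len[of "Suc i" ?N ps] s by simp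
    moreover have "path_len ps = sum ?f {0..<i} + sum ?f {i..<Suc i} + sum ?f {Suc i..<?N}"
      unfolding path_len_sum using s by (intro sum_split3) auto
    moreover have "l1 (ps!i) z + l1 z (ps!Suc i) = ?f i" using l1_seg s by blast
    moreover have "l1 (ps!0) z \<le> l1 (ps!0) (ps!i) + l1 (ps!i) z" by (rule l1_tri)
    moreover have "l1 z (ps!?N) \<le> l1 z (ps!Suc i) + l1 (ps!Suc i) (ps!?N)" by (rule l1_tri)
    ultimately show ?thesis using hd la by simp
  qed
qed

lemma set_path_set: "set ps \<subseteq> path_set ps" by (auto simp: path_set_def)

lemma len_ge: assumes "rect_path ps" shows "l1 (hd ps) (last ps) \<le> path_len ps"
proof -
  have ne: "ps \<noteq> []" using assms by (simp add: rect_path_def)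
  then have "last ps \<in> path_set ps" using set_path_set[of ps] last_in_set[of ps] by blast
  from box_len[OF ne this] show ?thesis by simp
qed


lemma path_set_connected: assumes "ps \<noteq> []" shows "connected (path_set ps)"
proof -
  define C where "C k = insert (ps!0) (\<Union>i<k. closed_segment (ps!i) (ps!Suc i))" for k
  have "k < length ps \<Longrightarrow> connected (C k)" for k
  proof (induction k)
    case 0 then show ?case by (simp add: C_def)
  next
    case (Suc k)
    have e: "C (Suc k) = C k \<union> closed_segment (ps!k) (ps!Suc k)" by (auto simp: C_def lessThan_Suc)
    have "ps!k \<in> C k"
    proof (cases k)
      case 0 then show ?thesis by (simp add: C_def)
    next
      case (Suc k') then show ?thesis by (auto simp: C_def)
    qed
    then show ?case unfolding e using Suc by (intro connected_Un) auto
  qed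
  moreover have "path_set ps = C (length ps - 1)"
  proof
    show "path_set ps \<subseteq> C (length ps - 1)"
    proof
      fix z assume "z \<in> path_set ps"
      then consider (v) i where "i < length ps" "z = ps!i"
        | (s) i where "Suc i < length ps" "z \<in> closed_segment (ps!i) (ps!Suc i)"
        unfolding path_set_def by (auto simp: in_set_conv_nth)
      then show "z \<in> C (length ps - 1)"
      proof cases
        case v then show ?thesis
          by (cases i) (auto simp: C_def intro!: bexI[where x="i - 1"])
      next
        case s then show ?thesis by (auto simp: C_def)
      qed
    qed
    show "C (length ps - 1) \<subseteq> path_set ps"
      using assms by (auto simp: C_def path_set_def)
  qed
  ultimately show ?thesis using assms by simp
qed

lemma conn_cover_fst: fixes C :: "pt set" assumes "connected C" "p \<in> C" "q \<in> C" "t \<in> closed_segment (fst p) (fst q)"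
  shows "\<exists>z\<in>C. fst z = t"
proof -
  have "connected (fst ` C)" using assms(1) by (intro connected_continuous_image continuous_intros)
  then have I: "\<And>x y z. x \<in> fst ` C \<Longrightarrow> y \<in> fst ` C \<Longrightarrow> x \<le> z \<Longrightarrow> z \<le> y \<Longrightarrow> z \<in> fst ` C"
    unfolding connected_iff_interval by blast
  have "fst p \<in> fst ` C" "fst q \<in> fst ` C" using assms(2,3) by auto
  moreover have "fst p \<le> t \<and> t \<le> fst q \<or> fst q \<le> t \<and> t \<le> fst p"
    using assms(4) by (auto simp: closed_segment_eq_real_ivl split: if_splits)
  ultimately have "t \<in> fst ` C" using I by blast
  then show ?thesis by auto
qed

lemma conn_cover_snd: fixes C :: "pt set" assumes "connected C" "p \<in> C" "q \<in> C" "t \<in> closed_segment (snd p) (snd q)"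
  shows "\<exists>z\<in>C. snd z = t"
proof -
  have "connected (snd ` C)" using assms(1) by (intro connected_continuous_image continuous_intros)
  then have I: "\<And>x y z. x \<in> snd ` C \<Longrightarrow> y \<in> snd ` C \<Longrightarrow> x \<le> z \<Longrightarrow> z \<le> y \<Longrightarrow> z \<in> snd ` C"
    unfolding connected_iff_interval by blast
  have "snd p \<in> snd ` C" "snd q \<in> snd ` C" using assms(2,3) by auto
  moreover have "snd p \<le> t \<and> t \<le> snd q \<or> snd q \<le> t \<and> t \<le> snd p"
    using assms(4) by (auto simp: closed_segment_eq_real_ivl split: if_splits)
  ultimately have "t \<in> snd ` C" using I by blast
  then show ?thesis by auto
qed

lemma path_set1: "path_set [x] = {x}" by (auto simp: path_set_def)
lemma path_set2: "path_set [x, y] = closed_segment x y" by (auto simp: path_set_def)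
lemma path_set3: "path_set [x, y, z] = closed_segment x y \<union> closed_segment y z"
proof -
  have "{i. Suc i < length [x,y,z]} = {0, 1}" by auto
  then show ?thesis by (auto simp: path_set_def)
qed
lemma path_len1: "path_len [x] = 0" by (auto simp: path_len_def)
lemma path_len2: "path_len [x, y] = l1 x y" by (auto simp: path_len_def)
lemma path_len3: "path_len [x, y, z] = l1 x y + l1 y z"
proof -
  have "{i. Suc i < length [x,y,z]} = {0, 1}" by auto
  then show ?thesis by (auto simp: path_len_def)
qed
lemma rect_path1: "rect_path [x]" by (auto simp: rect_path_def)
lemma rect_path2: "rect_path [x, y] \<longleftrightarrow> x \<noteq> y \<and> (fst x = fst y \<or> snd x = snd y)"
  by (auto simp: rect_path_def)
lemma rect_path3: "rect_path [x, y, z] \<longleftrightarrow> x \<noteq> y \<and> (fst x = fst y \<or> snd x = snd y) \<and> y \<noteq> z \<and> (fst y = fst z \<or> snd y = snd z)"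
  by (auto simp: rect_path_def less_Suc_eq)

lemma corners_small: assumes "length ps \<le> 3" shows "card (corners ps) \<le> 1"
proof -
  have "corners ps \<subseteq> {ps!1}"
  proof
    fix x assume "x \<in> corners ps"
    then obtain i where "x = ps!Suc i" "Suc (Suc i) < length ps" by (auto simp: corners_def)
    moreover then have "i = 0" using assms by arith
    ultimately show "x \<in> {ps!1}" by simp
  qed
  then have "card (corners ps) \<le> card {ps!1}" by (intro card_mono) auto
  then show ?thesis by simp
qed

definition cp :: "pt \<Rightarrow> pt \<Rightarrow> pt \<Rightarrow> pt list" where
  "cp p m q = (if p = m then [m] else [p, m]) @ (if m = q then [] else [q])"

lemma l1_corner: "(snd p = snd m \<and> fst m = fst q) \<or> (fst p = fst m \<and> snd m = snd q) \<Longrightarrow> l1 p m + l1 m q = l1 p q"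
  by (auto simp: l1_def)

lemma cp_props: assumes A: "(snd p = snd m \<and> fst m = fst q) \<or> (fst p = fst m \<and> snd m = snd q)"
  shows "short1 p q (cp p m q)" "path_set (cp p m q) = closed_segment p m \<union> closed_segment m q"
    "path_len (cp p m q) = l1 p q"
proof -
  have L: "l1 p m + l1 m q = l1 p q" by (rule l1_corner[OF A])
  have r: "rect_path (cp p m q) \<and> hd (cp p m q) = p \<and> last (cp p m q) = q \<and>
    path_len (cp p m q) = l1 p q \<and>
    path_set (cp p m q) = closed_segment p m \<union> closed_segment m q \<and>
    length (cp p m q) \<le> 3"
  proof (cases "p = m")
    case True
    show ?thesis
    proof (cases "m = q")
      case True
      then show ?thesis using \<open>p = m\<close> by (simp add: cp_def rect_path1 path_len1 path_set1)
    next
      case False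
      then have "cp p m q = [m, q]" using \<open>p = m\<close> by (simp add: cp_def)
      then show ?thesis using \<open>p = m\<close> False A L by (auto simp: rect_path2 path_len2 path_set2)
    qed
  next
    case False
    show ?thesis
    proof (cases "m = q")
      case True
      then have "cp p m q = [p, m]" using False by (simp add: cp_def)
      then show ?thesis using True False A L by (auto simp: rect_path2 path_len2 path_set2)
    next
      case F2: False
      then have "cp p m q = [p, m, q]" using False by (simp add: cp_def)
      have al: "fst p = fst m \<or> snd p = snd m" "fst m = fst q \<or> snd m = snd q" using A by auto
      have "rect_path [p, m, q]" unfolding rect_path3 using F2 False al by blast
      moreover have "path_len [p, m, q] = l1 p q" unfolding path_len3 by (rule L)
      ultimately show ?thesis unfolding \<open>cp p m q = [p, m, q]\<close> path_set3 by simp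
    qed
  qed
  have pl: "path_len (cp p m q) = l1 p q" using r by (elim conjE)
  have "path_len (cp p m q) \<le> path_len ps'" if "rect_path ps'" "hd ps' = p" "last ps' = q" for ps'
    using len_ge[OF that(1)] unfolding that(2,3) pl .
  then have "shortest_rect_path p q (cp p m q)"
    unfolding shortest_rect_path_def using r by simp
  moreover have "card (corners (cp p m q)) \<le> 1" using r by (intro corners_small) (elim conjE)
  ultimately show "short1 p q (cp p m q)" unfolding short1_def by (intro conjI)
  show "path_set (cp p m q) = closed_segment p m \<union> closed_segment m q" using r by (elim conjE)
  show "path_len (cp p m q) = l1 p q" by (rule pl)
qed


lemma const_range:
  assumes step: "\<And>i. lo \<le> i \<Longrightarrow> i < hi \<Longrightarrow> P i = P (Suc i)" and "lo \<le> i" "i \<le> hi"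
  shows "P i = P lo"
  using assms(2,3)
proof (induction i)
  case 0 then show ?case by simp
next
  case (Suc i)
  show ?case
  proof (cases "lo = Suc i")
    case True then show ?thesis by simp
  next
    case False
    then have "lo \<le> i" using Suc by simp
    then have "P i = P lo" using Suc by simp
    moreover have "P i = P (Suc i)" using step \<open>lo \<le> i\<close> Suc.prems by simp
    ultimately show ?thesis by simp
  qed
qed

lemma tight_distinct:
  assumes "rect_path ps" "path_len ps \<le> l1 (hd ps) (last ps)" "i < j" "j < length ps"
  shows "ps!i \<noteq> ps!j"
proof
  assume eq: "ps!i = ps!j"
  let ?f = "\<lambda>i. l1 (ps!i) (ps!Suc i)"
  let ?N = "length ps - 1"
  have ne: "ps \<noteq> []" using assms(1) by (simp add: rect_path_def)
  have hd: "hd ps = ps!0" and la: "last ps = ps!?N" using ne by (auto simp: hd_conv_nth last_conv_nth)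
  have s: "path_len ps = sum ?f {0..<i} + sum ?f {i..<j} + sum ?f {j..<?N}"
    unfolding path_len_sum using assms by (intro sum_split3) auto
  have "l1 (ps!0) (ps!i) \<le> sum ?f {0..<i}" using partial_len[of 0 i ps] assms by simp
  moreover have "l1 (ps!j) (ps!?N) \<le> sum ?f {j..<?N}" using partial_len[of j ?N ps] assms by simp
  moreover have "?f i \<le> sum ?f {i..<j}"
    by (rule member_le_sum) (use assms in \<open>auto simp: l1_nonneg\<close>)
  moreover have "0 < ?f i" using assms(1,3,4) by (intro l1_pos) (auto simp: rect_path_def)
  moreover have "l1 (ps!0) (ps!?N) \<le> l1 (ps!0) (ps!i) + l1 (ps!j) (ps!?N)" using eq l1_tri by metis
  moreover have "path_len ps \<le> l1 (ps!0) (ps!?N)" using assms(2) hd la by simp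
  ultimately show False using s by linarith
qed

lemma short1_shape:
  assumes "short1 p q ps"
  shows "\<exists>m. (m = (fst q, snd p) \<or> m = (fst p, snd q)) \<and> path_set ps = closed_segment p m \<union> closed_segment m q"
proof -
  have sh: "shortest_rect_path p q ps" and cc: "card (corners ps) \<le> 1" using assms by (auto simp: short1_def)
  have rp: "rect_path ps" and hp: "hd ps = p" and lq: "last ps = q" using sh by (auto simp: shortest_rect_path_def)
  have ne: "ps \<noteq> []" using rp by (simp add: rect_path_def)
  define n where "n = length ps"
  have n1: "n \<ge> 1" using ne by (cases ps) (auto simp: n_def)
  have p0: "ps!0 = p" using hp ne by (simp add: hd_conv_nth)
  have qN: "ps!(n - 1) = q" using lq ne by (simp add: last_conv_nth n_def)
  have cpq: "short1 p q (cp p (fst q, snd p) q)" "path_len (cp p (fst q, snd p) q) = l1 p q"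
    using cp_props[of p "(fst q, snd p)" q] by auto
  have "shortest_rect_path p q (cp p (fst q, snd p) q)" using cpq(1) by (simp add: short1_def)
  then have "rect_path (cp p (fst q, snd p) q) \<and> hd (cp p (fst q, snd p) q) = p \<and> last (cp p (fst q, snd p) q) = q"
    by (simp add: shortest_rect_path_def)
  then have "path_len ps \<le> path_len (cp p (fst q, snd p) q)" using sh unfolding shortest_rect_path_def by blast
  then have tight: "path_len ps \<le> l1 p q" using cpq(2) by simp
  have box: "fst z \<in> closed_segment (fst p) (fst q) \<and> snd z \<in> closed_segment (snd p) (snd q)"
    if "z \<in> path_set ps" for z
  proof -
    have "l1 p z + l1 z q \<le> l1 p q" using box_len[OF ne that] tight hp lq by simp
    then show ?thesis by (rule l1_between)
  qed
  have dist: "ps!i \<noteq> ps!j" if "i < j" "j < n" for i j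
    using tight_distinct[OF rp _ that[unfolded n_def]] tight hp lq by simp
  have inps: "ps!i \<in> path_set ps" if "i < n" for i
    using that set_path_set[of ps] by (auto simp: n_def)
  have conn: "connected (path_set ps)" by (rule path_set_connected[OF ne])
  have pin: "p \<in> path_set ps" and qin: "q \<in> path_set ps" using inps[of 0] inps[of "n-1"] p0 qN n1 by auto
  define H where "H i = (snd (ps!i) = snd (ps!Suc i))" for i
  have HV: "fst (ps!i) = fst (ps!Suc i) \<longleftrightarrow> \<not> H i" if "Suc i < n" for i
  proof -
    have "ps!i \<noteq> ps!Suc i" "fst (ps!i) = fst (ps!Suc i) \<or> snd (ps!i) = snd (ps!Suc i)"
      using rp that unfolding rect_path_def n_def by auto
    then show ?thesis unfolding H_def by (auto simp: prod_eq_iff)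
  qed
  have dn: "ps!i \<noteq> ps!Suc i" if "Suc i < n" for i using rp that unfolding rect_path_def n_def by blast
  define C where "C = {i. Suc (Suc i) < n \<and> H i \<noteq> H (Suc i)}"
  have cond: "((horiz (ps!i) (ps!Suc i) \<and> vert (ps!Suc i) (ps!Suc (Suc i))) \<or>
       (vert (ps!i) (ps!Suc i) \<and> horiz (ps!Suc i) (ps!Suc (Suc i)))) \<longleftrightarrow> H i \<noteq> H (Suc i)"
    if "Suc (Suc i) < n" for i
    using HV[of i] HV[of "Suc i"] dn[of i] dn[of "Suc i"] that unfolding horiz_def vert_def H_def
    by auto
  have corn: "corners ps = (\<lambda>i. ps!Suc i) ` C"
    unfolding corners_def C_def using cond by (auto simp: n_def)
  have inj: "inj_on (\<lambda>i. ps!Suc i) C"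
  proof (rule inj_onI)
    fix i j assume "i \<in> C" "j \<in> C" "ps!Suc i = ps!Suc j"
    then show "i = j" using dist[of "Suc i" "Suc j"] dist[of "Suc j" "Suc i"]
      by (auto simp: C_def dest: linorder_neq_iff[THEN iffD1])
  qed
  have finC: "finite C" by (rule finite_subset[of _ "{..<n}"]) (auto simp: C_def)
  have cardC: "card C \<le> 1" using cc corn card_image[OF inj] by simp
  obtain k b where k: "k < n" "\<And>i. i < k \<Longrightarrow> H i = b" "\<And>i. k \<le> i \<Longrightarrow> Suc i < n \<Longrightarrow> H i = (\<not> b)"
  proof (cases "C = {}")
    case True
    have step: "H i = H (Suc i)" if "0 \<le> i" "i < n - 2" for i
    proof -
      have "Suc (Suc i) < n" using that by simp
      moreover have "i \<notin> C" using True by simp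
      ultimately show ?thesis unfolding C_def by blast
    qed
    have "H i = H 0" if "i < n - 1" for i using const_range[of 0 "n - 2" H i, OF step] that by simp
    show ?thesis
    proof (rule that[of "n - 1" "H 0"])
      show "n - 1 < n" using n1 by simp
      show "H i = H 0" if "i < n - 1" for i using \<open>\<And>i. i < n - 1 \<Longrightarrow> H i = H 0\<close> that .
      show "H i = (\<not> H 0)" if "n - 1 \<le> i" "Suc i < n" for i using that by simp
    qed
  next
    case False
    then obtain j where jC: "j \<in> C" by blast
    have "\<forall>a1\<in>C. \<forall>a2\<in>C. a1 = a2" using cardC finC card_le_Suc0_iff_eq[of C] by simp
    then have Cj: "C = {j}" using jC by blast
    then have jn: "Suc (Suc j) < n" "H j \<noteq> H (Suc j)" using jC by (auto simp: C_def)
    have step1: "H i = H (Suc i)" if "0 \<le> i" "i < j" for i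
    proof -
      have "Suc (Suc i) < n" using that jn by simp
      moreover have "i \<notin> C" using Cj that by simp
      ultimately show ?thesis unfolding C_def by blast
    qed
    have pre: "H i = H 0" if "i \<le> j" for i using const_range[of 0 j H i, OF step1] that by auto
    have step2: "H i = H (Suc i)" if "Suc j \<le> i" "i < n - 2" for i
    proof -
      have "Suc (Suc i) < n" using that by simp
      moreover have "i \<notin> C" using Cj that by simp
      ultimately show ?thesis unfolding C_def by blast
    qed
    have suf: "H i = H (Suc j)" if "Suc j \<le> i" "i \<le> n - 2" for i using const_range[of "Suc j" "n - 2" H i, OF step2] that by auto
    show ?thesis
    proof (rule that[of "Suc j" "H j"])
      show "Suc j < n" using jn by simp
      show "H i = H j" if "i < Suc j" for i using pre[of i] pre[of j] that by simp
      show "H i = (\<not> H j)" if "Suc j \<le> i" "Suc i < n" for i using suf[of i] that jn by auto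
    qed
  qed
  show ?thesis
  proof (cases b)
    case True
    define m where "m = (fst q, snd p)"
    have step: "\<And>i. 0 \<le> i \<Longrightarrow> i < k \<Longrightarrow> snd (ps!i) = snd (ps!Suc i)" using k True H_def by auto
    have pre: "snd (ps!i) = snd p" if "i \<le> k" for i
      using const_range[of 0 k "\<lambda>i. snd (ps!i)" i, OF step] that p0 by auto
    have step2: "\<And>i. k \<le> i \<Longrightarrow> i < n - 1 \<Longrightarrow> fst (ps!i) = fst (ps!Suc i)" using k True HV by auto
    have suf0: "fst (ps!i) = fst (ps!k)" if "k \<le> i" "i \<le> n - 1" for i
      using const_range[of k "n - 1" "\<lambda>i. fst (ps!i)" i, OF step2] that by auto
    have suf: "fst (ps!i) = fst q" if "k \<le> i" "i < n" for i
      using suf0[of i] suf0[of "n - 1"] that k(1) qN by auto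
    have mk: "ps!k = m" using pre[of k] suf[of k] k(1) by (simp add: m_def prod_eq_iff)
    have sA: "closed_segment p m = closed_segment (fst p) (fst q) \<times> {snd p}"
      by (simp add: m_def closed_segment_same_snd)
    have sB: "closed_segment m q = {fst q} \<times> closed_segment (snd p) (snd q)"
      by (simp add: m_def closed_segment_same_fst)
    have ptA: "ps!i \<in> closed_segment p m" if "i \<le> k" for i
      using box[OF inps[of i]] pre[of i] that k(1) unfolding sA by (auto simp: mem_Times_iff)
    have ptB: "ps!i \<in> closed_segment m q" if "k \<le> i" "i < n" for i
      using box[OF inps[of i]] suf[of i] that unfolding sB by (auto simp: mem_Times_iff)
    have sub: "path_set ps \<subseteq> closed_segment p m \<union> closed_segment m q"
    proof
      fix z assume "z \<in> path_set ps"
      then consider (v) i where "i < n" "z = ps!i"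
        | (s) i where "Suc i < n" "z \<in> closed_segment (ps!i) (ps!Suc i)"
        unfolding path_set_def by (auto simp: in_set_conv_nth n_def)
      then show "z \<in> closed_segment p m \<union> closed_segment m q"
      proof cases
        case v then show ?thesis using ptA ptB by (cases "i \<le> k") auto
      next
        case s
        show ?thesis
        proof (cases "Suc i \<le> k")
          case True
          then have "closed_segment (ps!i) (ps!Suc i) \<subseteq> closed_segment p m"
            using ptA[of i] ptA[of "Suc i"] by (intro closed_segment_subset convex_closed_segment) auto
          then show ?thesis using s by auto
        next
          case False
          then have "closed_segment (ps!i) (ps!Suc i) \<subseteq> closed_segment m q"
            using ptB[of i] ptB[of "Suc i"] s by (intro closed_segment_subset convex_closed_segment) auto
          then show ?thesis using s by auto
        qed
      qed
    qed
    have minp: "m \<in> path_set ps" using inps[of k] k(1) mk by simp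
    have supA: "closed_segment p m \<subseteq> path_set ps"
    proof
      fix z assume z: "z \<in> closed_segment p m"
      then have zz: "snd z = snd p" "fst z \<in> closed_segment (fst p) (fst q)" unfolding sA by auto
      show "z \<in> path_set ps"
      proof (cases "fst z = fst q")
        case True then have "z = m" using zz by (simp add: m_def prod_eq_iff)
        then show ?thesis using minp by simp
      next
        case False
        obtain w where w: "w \<in> path_set ps" "fst w = fst z" using conn_cover_fst[OF conn pin qin zz(2)] by auto
        then have "w \<notin> closed_segment m q" using False unfolding sB by auto
        then have "w \<in> closed_segment p m" using w sub by auto
        then have "w = z" using w zz unfolding sA by (auto simp: prod_eq_iff)
        then show ?thesis using w by simp
      qed
    qed
    have supB: "closed_segment m q \<subseteq> path_set ps"
    proof
      fix z assume z: "z \<in> closed_segment m q"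
      then have zz: "fst z = fst q" "snd z \<in> closed_segment (snd p) (snd q)" unfolding sB by auto
      show "z \<in> path_set ps"
      proof (cases "snd z = snd p")
        case True then have "z = m" using zz by (simp add: m_def prod_eq_iff)
        then show ?thesis using minp by simp
      next
        case False
        obtain w where w: "w \<in> path_set ps" "snd w = snd z" using conn_cover_snd[OF conn pin qin zz(2)] by auto
        then have "w \<notin> closed_segment p m" using False unfolding sA by auto
        then have "w \<in> closed_segment m q" using w sub by auto
        then have "w = z" using w zz unfolding sB by (auto simp: prod_eq_iff)
        then show ?thesis using w by simp
      qed
    qed
    show ?thesis using sub supA supB by (intro exI[of _ m]) (auto simp: m_def)
  next
    case False
    define m where "m = (fst p, snd q)"
    have step: "\<And>i. 0 \<le> i \<Longrightarrow> i < k \<Longrightarrow> fst (ps!i) = fst (ps!Suc i)" using k False HV by auto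
    have pre: "fst (ps!i) = fst p" if "i \<le> k" for i
      using const_range[of 0 k "\<lambda>i. fst (ps!i)" i, OF step] that p0 by auto
    have step2: "\<And>i. k \<le> i \<Longrightarrow> i < n - 1 \<Longrightarrow> snd (ps!i) = snd (ps!Suc i)" using k False H_def by auto
    have suf0: "snd (ps!i) = snd (ps!k)" if "k \<le> i" "i \<le> n - 1" for i
      using const_range[of k "n - 1" "\<lambda>i. snd (ps!i)" i, OF step2] that by auto
    have suf: "snd (ps!i) = snd q" if "k \<le> i" "i < n" for i
      using suf0[of i] suf0[of "n - 1"] that k(1) qN by auto
    have mk: "ps!k = m" using pre[of k] suf[of k] k(1) by (simp add: m_def prod_eq_iff)
    have sA: "closed_segment p m = {fst p} \<times> closed_segment (snd p) (snd q)"
      by (simp add: m_def closed_segment_same_fst)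
    have sB: "closed_segment m q = closed_segment (fst p) (fst q) \<times> {snd q}"
      by (simp add: m_def closed_segment_same_snd)
    have ptA: "ps!i \<in> closed_segment p m" if "i \<le> k" for i
      using box[OF inps[of i]] pre[of i] that k(1) unfolding sA by (auto simp: mem_Times_iff)
    have ptB: "ps!i \<in> closed_segment m q" if "k \<le> i" "i < n" for i
      using box[OF inps[of i]] suf[of i] that unfolding sB by (auto simp: mem_Times_iff)
    have sub: "path_set ps \<subseteq> closed_segment p m \<union> closed_segment m q"
    proof
      fix z assume "z \<in> path_set ps"
      then consider (v) i where "i < n" "z = ps!i"
        | (s) i where "Suc i < n" "z \<in> closed_segment (ps!i) (ps!Suc i)"
        unfolding path_set_def by (auto simp: in_set_conv_nth n_def)
      then show "z \<in> closed_segment p m \<union> closed_segment m q"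
      proof cases
        case v then show ?thesis using ptA ptB by (cases "i \<le> k") auto
      next
        case s
        show ?thesis
        proof (cases "Suc i \<le> k")
          case True
          then have "closed_segment (ps!i) (ps!Suc i) \<subseteq> closed_segment p m"
            using ptA[of i] ptA[of "Suc i"] by (intro closed_segment_subset convex_closed_segment) auto
          then show ?thesis using s by auto
        next
          case False
          then have "closed_segment (ps!i) (ps!Suc i) \<subseteq> closed_segment m q"
            using ptB[of i] ptB[of "Suc i"] s by (intro closed_segment_subset convex_closed_segment) auto
          then show ?thesis using s by auto
        qed
      qed
    qed
    have minp: "m \<in> path_set ps" using inps[of k] k(1) mk by simp
    have supA: "closed_segment p m \<subseteq> path_set ps"
    proof
      fix z assume z: "z \<in> closed_segment p m"
      then have zz: "fst z = fst p" "snd z \<in> closed_segment (snd p) (snd q)" unfolding sA by auto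
      show "z \<in> path_set ps"
      proof (cases "snd z = snd q")
        case True then have "z = m" using zz by (simp add: m_def prod_eq_iff)
        then show ?thesis using minp by simp
      next
        case False
        obtain w where w: "w \<in> path_set ps" "snd w = snd z" using conn_cover_snd[OF conn pin qin zz(2)] by auto
        then have "w \<notin> closed_segment m q" using False unfolding sB by auto
        then have "w \<in> closed_segment p m" using w sub by auto
        then have "w = z" using w zz unfolding sA by (auto simp: prod_eq_iff)
        then show ?thesis using w by simp
      qed
    qed
    have supB: "closed_segment m q \<subseteq> path_set ps"
    proof
      fix z assume z: "z \<in> closed_segment m q"
      then have zz: "snd z = snd q" "fst z \<in> closed_segment (fst p) (fst q)" unfolding sB by auto
      show "z \<in> path_set ps"
      proof (cases "fst z = fst p")
        case True then have "z = m" using zz by (simp add: m_def prod_eq_iff)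
        then show ?thesis using minp by simp
      next
        case False
        obtain w where w: "w \<in> path_set ps" "fst w = fst z" using conn_cover_fst[OF conn pin qin zz(2)] by auto
        then have "w \<notin> closed_segment p m" using False unfolding sA by auto
        then have "w \<in> closed_segment m q" using w sub by auto
        then have "w = z" using w zz unfolding sB by (auto simp: prod_eq_iff)
        then show ?thesis using w by simp
      qed
    qed
    show ?thesis using sub supA supB by (intro exI[of _ m]) (auto simp: m_def)
  qed
qed


lemma ivt_zero:
  fixes g :: "real \<Rightarrow> real"
  assumes "continuous_on UNIV g" "g s < 0" "0 \<le> g y"
  shows "\<exists>t\<in>closed_segment s y. g t = 0"
proof (cases "s \<le> y")
  case True
  have cont: "continuous_on {s..y} g" using continuous_on_subset[OF assms(1)] by simp
  obtain t where "s \<le> t" "t \<le> y" "g t = 0"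
    using IVT'[of g s 0 y, OF _ _ True cont] assms(2,3) by auto
  then show ?thesis using True by (auto simp: closed_segment_eq_real_ivl)
next
  case False
  have cont: "continuous_on {y..s} g" using continuous_on_subset[OF assms(1)] by simp
  obtain t where "y \<le> t" "t \<le> s" "g t = 0"
    using IVT2'[of g s 0 y, OF _ _ _ cont] assms(2,3) False by auto
  then show ?thesis using False by (auto simp: closed_segment_eq_real_ivl)
qed

lemma between_cases:
  fixes A M Z H :: real
  assumes "Z \<in> closed_segment A M" "H \<notin> closed_segment A M" "Z \<noteq> A"
  shows "(A - Z) * (A - H) < 0 \<or> ((H - M) * (A - M) < 0 \<and> (Z = M \<or> (M - Z) * (M - H) < 0))"
proof (cases "A \<le> M")
  case True
  then have z: "A < Z" "Z \<le> M" and h: "H < A \<or> M < H" using assms by (auto simp: closed_segment_eq_real_ivl)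
  show ?thesis
  proof (cases "H < A")
    case True
    then have "(A - Z) * (A - H) < 0" using z by (intro mult_neg_pos) auto
    then show ?thesis by simp
  next
    case False
    then have H: "M < H" using h by simp
    have "(H - M) * (A - M) < 0" using H z by (intro mult_pos_neg) auto
    moreover have "Z = M \<or> (M - Z) * (M - H) < 0"
    proof (cases "Z = M")
      case False then have "(M - Z) * (M - H) < 0" using z H by (intro mult_pos_neg) auto
      then show ?thesis by simp
    qed simp
    ultimately show ?thesis by simp
  qed
next
  case False
  then have z: "Z < A" "M \<le> Z" and h: "H < M \<or> A < H" using assms by (auto simp: closed_segment_eq_real_ivl)
  show ?thesis
  proof (cases "A < H")
    case True
    then have "(A - Z) * (A - H) < 0" using z by (intro mult_pos_neg) auto
    then show ?thesis by simp
  next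
    case False
    then have H: "H < M" using h by simp
    have "(H - M) * (A - M) < 0" using H z by (intro mult_neg_pos) auto
    moreover have "Z = M \<or> (M - Z) * (M - H) < 0"
    proof (cases "Z = M")
      case False then have "(M - Z) * (M - H) < 0" using z H by (intro mult_neg_pos) auto
      then show ?thesis by simp
    qed simp
    ultimately show ?thesis by simp
  qed
qed

lemma seg_sign: fixes t A B :: real
  assumes "t \<in> closed_segment A B" shows "0 \<le> (t - B) * (A - B)"
proof (cases "A \<le> B")
  case True then have "t \<le> B" "A \<le> B" using assms by (auto simp: closed_segment_eq_real_ivl)
  then show ?thesis by (intro mult_nonpos_nonpos) auto
next
  case False then have "B \<le> t" "B \<le> A" using assms by (auto simp: closed_segment_eq_real_ivl)
  then show ?thesis by (intro mult_nonneg_nonneg) auto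
qed

lemma strict_between: fixes t A B :: real
  assumes "(t - A) * (t - B) < 0" shows "t \<in> closed_segment A B"
proof -
  have "(0 < t - A \<and> t - B < 0) \<or> (t - A < 0 \<and> 0 < t - B)" using assms by (simp add: mult_less_0_iff)
  then show ?thesis by (auto simp: closed_segment_eq_real_ivl)
qed

lemma dist_shift_snd: "dist z (fst z, t) = \<bar>snd z - t\<bar>"
  by (cases z) (simp add: dist_Pair_Pair dist_real_def)
lemma dist_shift_fst: "dist z (t, snd z) = \<bar>fst z - t\<bar>"
  by (cases z) (simp add: dist_Pair_Pair dist_real_def)

locale cs =
  fixes W :: "pt set" and a b c d :: pt and x0 x1 y0 y1 :: real
  assumes box: "\<And>z. z \<in> W \<Longrightarrow> x0 \<le> fst z \<and> fst z \<le> x1 \<and> y0 \<le> snd z \<and> snd z \<le> y1"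
  and y01: "y0 < y1" and x01: "x0 < x1"
  and rowc: "\<And>u w. u \<in> W \<Longrightarrow> w \<in> W \<Longrightarrow> snd u = snd w \<Longrightarrow> closed_segment u w \<subseteq> W"
  and colc: "\<And>u w. u \<in> W \<Longrightarrow> w \<in> W \<Longrightarrow> fst u = fst w \<Longrightarrow> closed_segment u w \<subseteq> W"
  and ya: "snd a = y0" and yb: "snd b = y1" and xc: "fst c = x0" and xd: "fst d = x1"
  and sH: "closed_segment a b \<subseteq> W" and sV: "closed_segment c d \<subseteq> W"
begin

definition hh :: "real \<Rightarrow> real" where "hh y = fst a + (y - y0) / (y1 - y0) * (fst b - fst a)"
definition vv :: "real \<Rightarrow> real" where "vv x = snd c + (x - x0) / (x1 - x0) * (snd d - snd c)"

lemma hh_cont: "continuous_on UNIV hh" unfolding hh_def using y01 by (intro continuous_intros) auto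
lemma vv_cont: "continuous_on UNIV vv" unfolding vv_def using x01 by (intro continuous_intros) auto

lemma hH: assumes "y0 \<le> y" "y \<le> y1" shows "(hh y, y) \<in> closed_segment a b"
proof -
  define u where "u = (y - y0) / (y1 - y0)"
  have u: "0 \<le> u" "u \<le> 1" using assms y01 by (auto simp: u_def divide_simps)
  have uu: "u * (y1 - y0) = y - y0" using y01 by (simp add: u_def)
  have "fst ((1 - u) *\<^sub>R a + u *\<^sub>R b) = hh y" by (simp add: hh_def u_def[symmetric] algebra_simps)
  moreover have "snd ((1 - u) *\<^sub>R a + u *\<^sub>R b) = y" using ya yb uu by (simp add: algebra_simps)
  ultimately have "(hh y, y) = (1 - u) *\<^sub>R a + u *\<^sub>R b" by (simp add: prod_eq_iff)
  then show ?thesis using u by (auto simp: in_segment)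
qed

lemma Hh: assumes "z \<in> closed_segment a b" shows "fst z = hh (snd z) \<and> y0 \<le> snd z \<and> snd z \<le> y1"
proof -
  obtain u where u: "0 \<le> u" "u \<le> 1" "z = (1 - u) *\<^sub>R a + u *\<^sub>R b" using assms by (auto simp: in_segment)
  have "snd z = (1 - u) * y0 + u * y1" "fst z = (1 - u) * fst a + u * fst b" unfolding u(3) using ya yb by auto
  then have sz: "snd z = y0 + u * (y1 - y0)" and fz: "fst z = fst a + u * (fst b - fst a)" by (auto simp: algebra_simps)
  have "u = (snd z - y0) / (y1 - y0)" using sz y01 by (simp add: divide_simps)
  then have "fst z = hh (snd z)" using fz by (simp add: hh_def)
  moreover have "0 \<le> u * (y1 - y0)" "u * (y1 - y0) \<le> y1 - y0" using u y01 by (auto simp: mult_left_le)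
  then have "y0 \<le> snd z" "snd z \<le> y1" using sz by linarith+
  ultimately show ?thesis by simp
qed

lemma vV: assumes "x0 \<le> x" "x \<le> x1" shows "(x, vv x) \<in> closed_segment c d"
proof -
  define u where "u = (x - x0) / (x1 - x0)"
  have u: "0 \<le> u" "u \<le> 1" using assms x01 by (auto simp: u_def divide_simps)
  have uu: "u * (x1 - x0) = x - x0" using x01 by (simp add: u_def)
  have "snd ((1 - u) *\<^sub>R c + u *\<^sub>R d) = vv x" by (simp add: vv_def u_def[symmetric] algebra_simps)
  moreover have "fst ((1 - u) *\<^sub>R c + u *\<^sub>R d) = x" using xc xd uu by (simp add: algebra_simps)
  ultimately have "(x, vv x) = (1 - u) *\<^sub>R c + u *\<^sub>R d" by (simp add: prod_eq_iff)
  then show ?thesis using u by (auto simp: in_segment)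
qed

lemma Vv: assumes "z \<in> closed_segment c d" shows "snd z = vv (fst z) \<and> x0 \<le> fst z \<and> fst z \<le> x1"
proof -
  obtain u where u: "0 \<le> u" "u \<le> 1" "z = (1 - u) *\<^sub>R c + u *\<^sub>R d" using assms by (auto simp: in_segment)
  have "fst z = (1 - u) * x0 + u * x1" "snd z = (1 - u) * snd c + u * snd d" unfolding u(3) using xc xd by auto
  then have sz: "fst z = x0 + u * (x1 - x0)" and fz: "snd z = snd c + u * (snd d - snd c)" by (auto simp: algebra_simps)
  have "u = (fst z - x0) / (x1 - x0)" using sz x01 by (simp add: divide_simps)
  then have "snd z = vv (fst z)" using fz by (simp add: vv_def)
  moreover have "0 \<le> u * (x1 - x0)" "u * (x1 - x0) \<le> x1 - x0" using u x01 by (auto simp: mult_left_le)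
  then have "x0 \<le> fst z" "fst z \<le> x1" using sz by linarith+
  ultimately show ?thesis by simp
qed

lemma int_box: assumes "z \<in> interior W" shows "x0 < fst z \<and> fst z < x1 \<and> y0 < snd z \<and> snd z < y1"
proof -
  obtain r where r: "r > 0" "ball z r \<subseteq> W" using assms by (auto simp: mem_interior)
  obtain zx zy where z: "z = (zx, zy)" by (cases z)
  have "(fst z + r/2, snd z) \<in> W" "(fst z - r/2, snd z) \<in> W" "(fst z, snd z + r/2) \<in> W" "(fst z, snd z - r/2) \<in> W"
    using r by (auto intro!: subsetD[OF r(2)] simp: z mem_ball dist_Pair_Pair dist_real_def)
  from box[OF this(1)] box[OF this(2)] box[OF this(3)] box[OF this(4)] show ?thesis using r by auto
qed

lemma row_fill:
  assumes "z \<in> interior W" "snd w = snd z" "(fst w - fst z) * (fst w - hh (snd z)) < 0"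
  shows "w \<in> interior W"
proof -
  obtain r where r: "r > 0" "ball z r \<subseteq> W" using assms by (auto simp: mem_interior)
  define U where "U = {p. y0 < snd p} \<inter> {p. snd p < y1} \<inter> {p. \<bar>snd p - snd z\<bar> < r} \<inter>
     {p. (fst p - fst z) * (fst p - hh (snd p)) < 0}"
  have "open U" unfolding U_def hh_def using y01
    by (intro open_Int open_Collect_less continuous_intros) auto
  moreover have "w \<in> U" using assms int_box[OF assms(1)] r by (auto simp: U_def)
  moreover have "U \<subseteq> W"
  proof
    fix p assume p: "p \<in> U"
    have 1: "(fst z, snd p) \<in> W" using p r by (auto intro!: subsetD[OF r(2)] simp: U_def mem_ball dist_shift_snd abs_minus_commute)
    have 2: "(hh (snd p), snd p) \<in> W" using p sH hH[of "snd p"] by (auto simp: U_def)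
    have "fst p \<in> closed_segment (fst z) (hh (snd p))" using p by (intro strict_between) (simp add: U_def)
    then have "p \<in> closed_segment (fst z, snd p) (hh (snd p), snd p)"
      by (simp add: closed_segment_same_snd mem_Times_iff)
    then show "p \<in> W" using rowc[OF 1 2] by auto
  qed
  ultimately show ?thesis using interior_maximal by blast
qed

lemma col_fill:
  assumes "z \<in> interior W" "fst w = fst z" "(snd w - snd z) * (snd w - vv (fst z)) < 0"
  shows "w \<in> interior W"
proof -
  obtain r where r: "r > 0" "ball z r \<subseteq> W" using assms by (auto simp: mem_interior)
  define U where "U = {p. x0 < fst p} \<inter> {p. fst p < x1} \<inter> {p. \<bar>fst p - fst z\<bar> < r} \<inter>
     {p. (snd p - snd z) * (snd p - vv (fst p)) < 0}"
  have "open U" unfolding U_def vv_def using x01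
    by (intro open_Int open_Collect_less continuous_intros) auto
  moreover have "w \<in> U" using assms int_box[OF assms(1)] r by (auto simp: U_def)
  moreover have "U \<subseteq> W"
  proof
    fix p assume p: "p \<in> U"
    have 1: "(fst p, snd z) \<in> W" using p r by (auto intro!: subsetD[OF r(2)] simp: U_def mem_ball dist_shift_fst abs_minus_commute)
    have 2: "(fst p, vv (fst p)) \<in> W" using p sV vV[of "fst p"] by (auto simp: U_def)
    have "snd p \<in> closed_segment (snd z) (vv (fst p))" using p by (intro strict_between) (simp add: U_def)
    then have "p \<in> closed_segment (fst p, snd z) (fst p, vv (fst p))"
      by (simp add: closed_segment_same_fst mem_Times_iff)
    then show "p \<in> W" using colc[OF 1 2] by auto
  qed
  ultimately show ?thesis using interior_maximal by blast
qed

end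

context cs begin

lemma stepH:
  assumes "snd e1 = snd m" "z \<in> closed_segment e1 m" "z \<in> interior W" "e1 \<notin> interior W"
    "closed_segment e1 m \<inter> closed_segment a b = {}"
  shows "m \<in> interior W \<and> (hh (snd m) - fst m) * (fst e1 - fst m) < 0"
proof -
  have seg: "closed_segment e1 m = closed_segment (fst e1) (fst m) \<times> {snd e1}"
    by (rule closed_segment_same_snd[OF assms(1)])
  have zs: "snd z = snd m" "fst z \<in> closed_segment (fst e1) (fst m)" using assms(2) assms(1) unfolding seg by auto
  have yb: "y0 < snd z" "snd z < y1" using int_box[OF assms(3)] by auto
  have "(hh (snd m), snd m) \<in> closed_segment a b" using hH[of "snd m"] yb zs by auto
  then have Hn: "hh (snd m) \<notin> closed_segment (fst e1) (fst m)" using assms(5) assms(1) unfolding seg by auto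
  have "z \<noteq> e1" using assms(3,4) by auto
  then have zne: "fst z \<noteq> fst e1" using zs assms(1) by (auto simp: prod_eq_iff)
  from between_cases[OF zs(2) Hn zne]
  consider "(fst e1 - fst z) * (fst e1 - hh (snd m)) < 0"
    | "(hh (snd m) - fst m) * (fst e1 - fst m) < 0" "fst z = fst m \<or> (fst m - fst z) * (fst m - hh (snd m)) < 0"
    by blast
  then show ?thesis
  proof cases
    case 1
    then have "e1 \<in> interior W" using row_fill[OF assms(3), of e1] zs assms(1) by simp
    then show ?thesis using assms(4) by simp
  next
    case 2
    have "m \<in> interior W"
    proof (cases "fst z = fst m")
      case True then have "z = m" using zs by (simp add: prod_eq_iff)
      then show ?thesis using assms(3) by simp
    next
      case False then show ?thesis using 2 row_fill[OF assms(3), of m] zs by simp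
    qed
    then show ?thesis using 2 by simp
  qed
qed

lemma stepV:
  assumes "fst m = fst e2" "z \<in> closed_segment m e2" "z \<in> interior W" "e2 \<notin> interior W"
    "closed_segment m e2 \<inter> closed_segment c d = {}"
  shows "m \<in> interior W \<and> (vv (fst m) - snd m) * (snd e2 - snd m) < 0"
proof -
  have seg: "closed_segment e2 m = {fst e2} \<times> closed_segment (snd e2) (snd m)"
    by (rule closed_segment_same_fst) (use assms(1) in simp)
  have z2: "z \<in> closed_segment e2 m" using assms(2) by (simp add: closed_segment_commute)
  have zs: "fst z = fst m" "snd z \<in> closed_segment (snd e2) (snd m)" using z2 assms(1) unfolding seg by auto
  have xb: "x0 < fst z" "fst z < x1" using int_box[OF assms(3)] by auto
  have "(fst m, vv (fst m)) \<in> closed_segment c d" using vV[of "fst m"] xb zs by auto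
  have "closed_segment m e2 = closed_segment e2 m" by (rule closed_segment_commute)
  then have Hn: "vv (fst m) \<notin> closed_segment (snd e2) (snd m)"
    using assms(5) assms(1) \<open>(fst m, vv (fst m)) \<in> closed_segment c d\<close> unfolding seg by auto
  have "z \<noteq> e2" using assms(3,4) by auto
  then have zne: "snd z \<noteq> snd e2" using zs assms(1) by (auto simp: prod_eq_iff)
  from between_cases[OF zs(2) Hn zne]
  consider "(snd e2 - snd z) * (snd e2 - vv (fst m)) < 0"
    | "(vv (fst m) - snd m) * (snd e2 - snd m) < 0" "snd z = snd m \<or> (snd m - snd z) * (snd m - vv (fst m)) < 0"
    by blast
  then show ?thesis
  proof cases
    case 1
    then have "e2 \<in> interior W" using col_fill[OF assms(3), of e2] zs assms(1) by simp
    then show ?thesis using assms(4) by simp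
  next
    case 2
    have "m \<in> interior W"
    proof (cases "snd z = snd m")
      case True then have "z = m" using zs by (simp add: prod_eq_iff)
      then show ?thesis using assms(3) by simp
    next
      case False then show ?thesis using 2 col_fill[OF assms(3), of m] zs by simp
    qed
    then show ?thesis using 2 by simp
  qed
qed

lemma key:
  assumes "snd e1 = snd m" "fst m = fst e2"
    "(closed_segment e1 m \<union> closed_segment m e2) \<inter> (closed_segment a b \<union> closed_segment c d) = {}"
    "(closed_segment e1 m \<union> closed_segment m e2) \<inter> interior W \<noteq> {}"
    "e1 \<notin> interior W" "e2 \<notin> interior W"
  shows "m \<in> interior W \<and> (hh (snd m) - fst m) * (fst e1 - fst m) < 0 \<and> (vv (fst m) - snd m) * (snd e2 - snd m) < 0"
proof -
  have a1: "closed_segment e1 m \<inter> closed_segment a b = {}" and a2: "closed_segment m e2 \<inter> closed_segment c d = {}"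
    using assms(3) by auto
  obtain z where z: "z \<in> closed_segment e1 m \<union> closed_segment m e2" "z \<in> interior W" using assms(4) by auto
  show ?thesis
  proof (cases "z \<in> closed_segment e1 m")
    case True
    from stepH[OF assms(1) True z(2) assms(5) a1]
    have h: "m \<in> interior W" "(hh (snd m) - fst m) * (fst e1 - fst m) < 0" by auto
    from stepV[OF assms(2) _ h(1) assms(6) a2] h show ?thesis by auto
  next
    case False
    then have "z \<in> closed_segment m e2" using z by auto
    from stepV[OF assms(2) this z(2) assms(6) a2]
    have h: "m \<in> interior W" "(vv (fst m) - snd m) * (snd e2 - snd m) < 0" by auto
    from stepH[OF assms(1) _ h(1) assms(5) a1] h show ?thesis by auto
  qed
qed

lemma lcase:
  assumes "(closed_segment p (fst q, snd p) \<union> closed_segment (fst q, snd p) q) \<inter> (closed_segment a b \<union> closed_segment c d) = {}"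
    "(closed_segment p (fst q, snd p) \<union> closed_segment (fst q, snd p) q) \<inter> interior W \<noteq> {}"
    "(closed_segment p (fst p, snd q) \<union> closed_segment (fst p, snd q) q) \<inter> interior W \<noteq> {}"
    "p \<notin> interior W" "q \<notin> interior W"
  shows False
proof -
  define m1 where "m1 = (fst q, snd p)"
  define m2 where "m2 = (fst p, snd q)"
  have k1: "m1 \<in> interior W" "(hh (snd p) - fst q) * (fst p - fst q) < 0" "(vv (fst q) - snd p) * (snd q - snd p) < 0"
    using key[of p m1 q] assms unfolding m1_def by auto
  have bm1: "y0 < snd p" "snd p < y1" "x0 < fst q" "fst q < x1" using int_box[OF k1(1)] by (auto simp: m1_def)
  have sA: "closed_segment p m1 = closed_segment (fst p) (fst q) \<times> {snd p}"
    unfolding m1_def by (rule closed_segment_same_snd[THEN trans]) auto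
  have sB: "closed_segment m1 q = {fst q} \<times> closed_segment (snd p) (snd q)"
    unfolding m1_def by (rule closed_segment_same_fst[THEN trans]) auto
  have hside: "(hh y - fst q) * (fst p - fst q) < 0"
    if y: "y \<in> closed_segment (snd p) (snd q)" "y0 \<le> y" "y \<le> y1" for y
  proof (rule ccontr)
    assume "\<not> ?thesis"
    then have "0 \<le> (hh y - fst q) * (fst p - fst q)" by simp
    moreover have "continuous_on UNIV (\<lambda>t. (hh t - fst q) * (fst p - fst q))"
      using hh_cont by (intro continuous_intros) (auto intro: continuous_on_subset)
    ultimately obtain t where t: "t \<in> closed_segment (snd p) y" "(hh t - fst q) * (fst p - fst q) = 0"
      using ivt_zero[of "\<lambda>t. (hh t - fst q) * (fst p - fst q)" "snd p" y] k1(2) by auto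
    have "fst p \<noteq> fst q" using k1(2) by auto
    then have ht: "hh t = fst q" using t(2) by simp
    have tseg: "t \<in> closed_segment (snd p) (snd q)"
      using t(1) y(1) by (meson closed_segment_subset convex_closed_segment ends_in_segment(1) subsetD)
    have "y0 \<le> t" "t \<le> y1" using t(1) y bm1 by (auto simp: closed_segment_eq_real_ivl split: if_splits)
    then have "(fst q, t) \<in> closed_segment a b" using hH[of t] ht by simp
    moreover have "(fst q, t) \<in> closed_segment m1 q" using tseg sB by simp
    ultimately show False using assms(1) unfolding m1_def by blast
  qed
  have vside: "(vv x - snd p) * (snd q - snd p) < 0"
    if x: "x \<in> closed_segment (fst p) (fst q)" "x0 \<le> x" "x \<le> x1" for x
  proof (rule ccontr)
    assume "\<not> ?thesis"
    then have "0 \<le> (vv x - snd p) * (snd q - snd p)" by simp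
    moreover have "continuous_on UNIV (\<lambda>t. (vv t - snd p) * (snd q - snd p))"
      using vv_cont by (intro continuous_intros) (auto intro: continuous_on_subset)
    ultimately obtain t where t: "t \<in> closed_segment (fst q) x" "(vv t - snd p) * (snd q - snd p) = 0"
      using ivt_zero[of "\<lambda>t. (vv t - snd p) * (snd q - snd p)" "fst q" x] k1(3) by auto
    have "snd p \<noteq> snd q" using k1(3) by auto
    then have vt: "vv t = snd p" using t(2) by simp
    have tseg: "t \<in> closed_segment (fst p) (fst q)"
      using t(1) x(1) by (meson closed_segment_subset convex_closed_segment ends_in_segment(2) subsetD)
    have "x0 \<le> t" "t \<le> x1" using t(1) x bm1 by (auto simp: closed_segment_eq_real_ivl split: if_splits)
    then have "(t, snd p) \<in> closed_segment c d" using vV[of t] vt by simp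
    moreover have "(t, snd p) \<in> closed_segment p m1" using tseg sA by simp
    ultimately show False using assms(1) unfolding m1_def by blast
  qed
  have avoid2: "(closed_segment q m2 \<union> closed_segment m2 p) \<inter> (closed_segment a b \<union> closed_segment c d) = {}"
  proof -
    have "w \<notin> closed_segment a b \<union> closed_segment c d" if w: "w \<in> closed_segment q m2 \<union> closed_segment m2 p" for w
    proof -
      have sC: "closed_segment q m2 = closed_segment (fst q) (fst p) \<times> {snd q}"
        unfolding m2_def by (rule closed_segment_same_snd[THEN trans]) auto
      have sD: "closed_segment m2 p = {fst p} \<times> closed_segment (snd q) (snd p)"
        unfolding m2_def by (rule closed_segment_same_fst[THEN trans]) auto
      have c1: "closed_segment (fst q) (fst p) = closed_segment (fst p) (fst q)" by (rule closed_segment_commute)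
      have c2: "closed_segment (snd q) (snd p) = closed_segment (snd p) (snd q)" by (rule closed_segment_commute)
      have wb: "fst w \<in> closed_segment (fst p) (fst q)" "snd w \<in> closed_segment (snd p) (snd q)"
        using w unfolding sC sD c1 c2 by auto
      have "w \<notin> closed_segment a b"
      proof
        assume "w \<in> closed_segment a b"
        from Hh[OF this] have "fst w = hh (snd w)" "y0 \<le> snd w" "snd w \<le> y1" by auto
        then have "(fst w - fst q) * (fst p - fst q) < 0" using hside[OF wb(2)] by simp
        moreover have "0 \<le> (fst w - fst q) * (fst p - fst q)" using seg_sign[OF wb(1)] .
        ultimately show False by simp
      qed
      moreover have "w \<notin> closed_segment c d"
      proof
        assume "w \<in> closed_segment c d"
        from Vv[OF this] have "snd w = vv (fst w)" "x0 \<le> fst w" "fst w \<le> x1" by auto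
        then have "(snd w - snd p) * (snd q - snd p) < 0" using vside[OF wb(1)] by simp
        moreover have "0 \<le> (snd w - snd p) * (snd q - snd p)"
          using seg_sign[of "snd w" "snd q" "snd p"] wb(2) by (simp add: closed_segment_commute)
        ultimately show False by simp
      qed
      ultimately show ?thesis by simp
    qed
    then show ?thesis by blast
  qed
  have l2int: "(closed_segment q m2 \<union> closed_segment m2 p) \<inter> interior W \<noteq> {}"
    using assms(3) unfolding m2_def by (auto simp: closed_segment_commute)
  have k2: "m2 \<in> interior W" "(hh (snd q) - fst p) * (fst q - fst p) < 0"
    using key[of q m2 p, OF _ _ avoid2 l2int assms(5) assms(4)] by (auto simp: m2_def)
  have "y0 < snd q" "snd q < y1" using int_box[OF k2(1)] by (auto simp: m2_def)
  then have "(hh (snd q) - fst q) * (fst p - fst q) < 0" using hside[of "snd q"] by simp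
  moreover have "(hh (snd q) - fst p) * (fst q - fst p) + (hh (snd q) - fst q) * (fst p - fst q) = (fst q - fst p) * (fst q - fst p)"
    by (simp add: algebra_simps)
  moreover have "0 \<le> (fst q - fst p) * (fst q - fst p)" by simp
  ultimately show False using k2(2) by linarith
qed

end

lemma seg_coords: "w \<in> closed_segment u v \<Longrightarrow> fst w \<in> closed_segment (fst u) (fst v) \<and> snd w \<in> closed_segment (snd u) (snd v)"
  by (cases u; cases v; cases w) (auto dest: closed_segment_PairD)

lemma Un_seg_comm: "closed_segment p m \<union> closed_segment m q = closed_segment q m \<union> closed_segment m p"
proof -
  have "closed_segment p m = closed_segment m p" "closed_segment m q = closed_segment q m"
    by (rule closed_segment_commute)+
  then show ?thesis by blast
qed

context cs begin

lemma skel: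
  assumes "p \<notin> interior W" "q \<notin> interior W" "\<forall>ps. short1 p q ps \<longrightarrow> path_set ps \<inter> interior W \<noteq> {}"
    "short1 p q ps"
  shows "\<exists>s\<in>{closed_segment a b, closed_segment c d}. path_set ps \<inter> s \<noteq> {}"
proof (rule ccontr)
  assume "\<not> ?thesis"
  then have av: "path_set ps \<inter> (closed_segment a b \<union> closed_segment c d) = {}" by auto
  obtain m where m: "m = (fst q, snd p) \<or> m = (fst p, snd q)" "path_set ps = closed_segment p m \<union> closed_segment m q"
    using short1_shape[OF assms(4)] by blast
  have i1: "path_set ps \<inter> interior W \<noteq> {}" using assms(3,4) by blast
  have c1: "short1 p q (cp p (fst q, snd p) q)" "path_set (cp p (fst q, snd p) q) = closed_segment p (fst q, snd p) \<union> closed_segment (fst q, snd p) q"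
    using cp_props[of p "(fst q, snd p)" q] by auto
  have c2: "short1 p q (cp p (fst p, snd q) q)" "path_set (cp p (fst p, snd q) q) = closed_segment p (fst p, snd q) \<union> closed_segment (fst p, snd q) q"
    using cp_props[of p "(fst p, snd q)" q] by auto
  have j1: "(closed_segment p (fst q, snd p) \<union> closed_segment (fst q, snd p) q) \<inter> interior W \<noteq> {}"
    using assms(3) c1 by metis
  have j2: "(closed_segment p (fst p, snd q) \<union> closed_segment (fst p, snd q) q) \<inter> interior W \<noteq> {}"
    using assms(3) c2 by metis
  from m(1) show False
  proof
    assume "m = (fst q, snd p)"
    then show False using lcase[of p q] av m(2) j1 j2 assms(1,2) by simp
  next
    assume mm: "m = (fst p, snd q)"
    have e: "closed_segment p m \<union> closed_segment m q = closed_segment q (fst p, snd q) \<union> closed_segment (fst p, snd q) p"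
      using Un_seg_comm[of p m q] mm by simp
    have j1': "(closed_segment q (fst q, snd p) \<union> closed_segment (fst q, snd p) p) \<inter> interior W \<noteq> {}"
      using j1 Un_seg_comm[of p "(fst q, snd p)" q] by simp
    show False using lcase[of q p] av m(2) e j1' i1 assms(1,2) by simp
  qed
qed

lemma row_hit:
  assumes "z \<in> interior W"
    and P: "\<And>p q. p \<notin> interior W \<Longrightarrow> q \<notin> interior W \<Longrightarrow> (\<forall>ps. short1 p q ps \<longrightarrow> path_set ps \<inter> interior W \<noteq> {})
       \<Longrightarrow> (\<forall>ps. short1 p q ps \<longrightarrow> (\<exists>s\<in>S'. path_set ps \<inter> s \<noteq> {}))"
  shows "\<exists>s\<in>S'. \<exists>w\<in>s. snd w = snd z"
proof -
  define p where "p = (x0 - 1, snd z)"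
  define q where "q = (x1 + 1, snd z)"
  have pn: "p \<notin> interior W" using box[of p] interior_subset by (force simp: p_def)
  have qn: "q \<notin> interior W" using box[of q] interior_subset by (force simp: q_def)
  have sg: "closed_segment p q = closed_segment (x0 - 1) (x1 + 1) \<times> {snd z}"
    unfolding p_def q_def by (rule closed_segment_same_snd[THEN trans]) auto
  have ps_eq: "path_set ps = closed_segment p q" if sp: "short1 p q ps" for ps
  proof -
    obtain m where m: "m = (fst q, snd p) \<or> m = (fst p, snd q)" "path_set ps = closed_segment p m \<union> closed_segment m q"
      using short1_shape[OF sp] by blast
    have "m = q \<or> m = p" using m(1) by (auto simp: p_def q_def)
    then show ?thesis using m(2) by auto
  qed
  have zin: "z \<in> closed_segment p q" using int_box[OF assms(1)] unfolding sg
    by (auto simp: closed_segment_eq_real_ivl mem_Times_iff)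
  have "\<forall>ps. short1 p q ps \<longrightarrow> path_set ps \<inter> interior W \<noteq> {}" using ps_eq zin assms(1) by blast
  then have H: "\<forall>ps. short1 p q ps \<longrightarrow> (\<exists>s\<in>S'. path_set ps \<inter> s \<noteq> {})" using P pn qn by blast
  have "short1 p q (cp p q q)" using cp_props(1)[of p q q] by (simp add: p_def q_def)
  then obtain s w where "s \<in> S'" "w \<in> s" "w \<in> closed_segment p q" using H ps_eq by blast
  then show ?thesis unfolding sg by (auto simp: mem_Times_iff)
qed

lemma col_hit:
  assumes "z \<in> interior W"
    and P: "\<And>p q. p \<notin> interior W \<Longrightarrow> q \<notin> interior W \<Longrightarrow> (\<forall>ps. short1 p q ps \<longrightarrow> path_set ps \<inter> interior W \<noteq> {})
       \<Longrightarrow> (\<forall>ps. short1 p q ps \<longrightarrow> (\<exists>s\<in>S'. path_set ps \<inter> s \<noteq> {}))"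
  shows "\<exists>s\<in>S'. \<exists>w\<in>s. fst w = fst z"
proof -
  define p where "p = (fst z, y0 - 1)"
  define q where "q = (fst z, y1 + 1)"
  have pn: "p \<notin> interior W" using box[of p] interior_subset by (force simp: p_def)
  have qn: "q \<notin> interior W" using box[of q] interior_subset by (force simp: q_def)
  have sg: "closed_segment p q = {fst z} \<times> closed_segment (y0 - 1) (y1 + 1)"
    unfolding p_def q_def by (rule closed_segment_same_fst[THEN trans]) auto
  have ps_eq: "path_set ps = closed_segment p q" if sp: "short1 p q ps" for ps
  proof -
    obtain m where m: "m = (fst q, snd p) \<or> m = (fst p, snd q)" "path_set ps = closed_segment p m \<union> closed_segment m q"
      using short1_shape[OF sp] by blast
    have "m = p \<or> m = q" using m(1) by (auto simp: p_def q_def)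
    then show ?thesis using m(2) by auto
  qed
  have zin: "z \<in> closed_segment p q" using int_box[OF assms(1)] unfolding sg
    by (auto simp: closed_segment_eq_real_ivl mem_Times_iff)
  have "\<forall>ps. short1 p q ps \<longrightarrow> path_set ps \<inter> interior W \<noteq> {}" using ps_eq zin assms(1) by blast
  then have H: "\<forall>ps. short1 p q ps \<longrightarrow> (\<exists>s\<in>S'. path_set ps \<inter> s \<noteq> {})" using P pn qn by blast
  have "short1 p q (cp p q q)" using cp_props(1)[of p q q] by (simp add: p_def q_def)
  then obtain s w where "s \<in> S'" "w \<in> s" "w \<in> closed_segment p q" using H ps_eq by blast
  then show ?thesis unfolding sg by (auto simp: mem_Times_iff)
qed

end

lemma coll_snd: "snd x = snd y \<Longrightarrow> snd y = snd z \<Longrightarrow> collinear {x, y, z::pt}"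
  unfolding collinear_def
  by (rule exI[of _ "(1, 0)"]) (auto simp: prod_eq_iff intro!: exI[where x="fst _ - fst _"])

lemma coll_fst: "fst x = fst y \<Longrightarrow> fst y = fst z \<Longrightarrow> collinear {x, y, z::pt}"
  unfolding collinear_def
  by (rule exI[of _ "(0, 1)"]) (auto simp: prod_eq_iff intro!: exI[where x="snd _ - snd _"])

lemma region_eq: "region vs = poly_boundary vs \<union> inside (poly_boundary vs)"
  by (simp add: region_def inside_def)

lemma edges_img: "edges vs = (\<lambda>i. (vs!i, vs!nxt vs i)) ` {..<length vs}" by (auto simp: edges_def)

lemma pb_UN: "poly_boundary vs = (\<Union>i<length vs. closed_segment (vs!i) (vs!nxt vs i))"
  by (simp add: poly_boundary_def edges_img seg_def)

lemma poly_boundary_iff: "z \<in> poly_boundary vs \<longleftrightarrow> (\<exists>i<length vs. z \<in> closed_segment (vs!i) (vs!nxt vs i))"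
  by (auto simp: pb_UN)

lemma closed_boundary: "closed (poly_boundary vs)"
proof -
  have "poly_boundary vs = (\<Union>i\<in>{..<length vs}. closed_segment (vs!i) (vs!nxt vs i))"
    by (auto simp: poly_boundary_iff)
  then show ?thesis by auto
qed

lemma nxt_less: "0 < length vs \<Longrightarrow> nxt vs i < length vs" unfolding nxt_def by (rule mod_less_divisor)

lemma vbounds: assumes "v \<in> set vs"
  shows "xmin vs \<le> fst v" "fst v \<le> xmax vs" "ymin vs \<le> snd v" "snd v \<le> ymax vs"
  using assms by (auto simp: xmin_def xmax_def ymin_def ymax_def intro!: Min_le Max_ge)

definition Bx :: "pt list \<Rightarrow> pt set" where
  "Bx vs = {xmin vs..xmax vs} \<times> {ymin vs..ymax vs}"

lemma convex_Bx: "convex (Bx vs)" unfolding Bx_def by (intro convex_Times convex_real_interval)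

lemma boundary_Bx: "poly_boundary vs \<subseteq> Bx vs"
proof
  fix z assume "z \<in> poly_boundary vs"
  then obtain i where i: "i < length vs" "z \<in> closed_segment (vs!i) (vs!nxt vs i)" by (auto simp: poly_boundary_iff)
  have "0 < length vs" using i(1) by arith
  then have "nxt vs i < length vs" by (rule nxt_less)
  then have m: "vs!i \<in> set vs" "vs!nxt vs i \<in> set vs" using i(1) by (simp_all add: nth_mem)
  have "vs!i \<in> Bx vs" "vs!nxt vs i \<in> Bx vs"
    using vbounds[OF m(1)] vbounds[OF m(2)] by (auto simp: Bx_def mem_Times_iff)
  then show "z \<in> Bx vs" using i(2) closed_segment_subset[OF _ _ convex_Bx] by blast
qed

lemma region_Bx: "region vs \<subseteq> Bx vs"
proof -
  have "- Bx vs \<subseteq> outside (poly_boundary vs)"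
    by (rule outside_subset_convex[OF convex_Bx boundary_Bx])
  then have "inside (poly_boundary vs) \<subseteq> Bx vs" using inside_Int_outside by blast
  then show ?thesis using boundary_Bx region_eq by blast
qed

lemma minmax_strict:
  assumes "simple_polygon vs" "general_position vs"
  shows "xmin vs < xmax vs" "ymin vs < ymax vs"
proof -
  have n: "length vs \<ge> 3" "distinct vs" using assms(1) by (auto simp: simple_polygon_def)
  have "0 < length vs" "1 < length vs" "2 < length vs" using n by auto
  then have in3: "vs!0 \<in> set vs" "vs!1 \<in> set vs" "vs!2 \<in> set vs" by (simp_all add: nth_mem)
  have D: "\<And>i j. i < length vs \<Longrightarrow> j < length vs \<Longrightarrow> i \<noteq> j \<Longrightarrow> vs!i \<noteq> vs!j"
    using n(2) by (simp add: distinct_conv_nth)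
  have d3: "vs!0 \<noteq> vs!1" "vs!0 \<noteq> vs!2" "vs!1 \<noteq> vs!2"
    using D[of 0 1] D[of 0 2] D[of 1 2] n(1) by linarith+
  have nc: "\<not> collinear {vs!0, vs!1, vs!2}" using assms(2) in3 d3 unfolding general_position_def by blast
  show "xmin vs < xmax vs"
  proof (rule ccontr)
    assume "\<not> ?thesis"
    then have "fst v = xmin vs" if "v \<in> set vs" for v using vbounds[OF that] by linarith
    then show False using nc coll_fst[of "vs!0" "vs!1" "vs!2"] in3 by simp
  qed
  show "ymin vs < ymax vs"
  proof (rule ccontr)
    assume "\<not> ?thesis"
    then have "snd v = ymin vs" if "v \<in> set vs" for v using vbounds[OF that] by linarith
    then show False using nc coll_snd[of "vs!0" "vs!1" "vs!2"] in3 by simp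
  qed
qed

lemma shortest_box:
  assumes "shortest_rect_path p q ps" "z \<in> path_set ps"
  shows "fst z \<in> closed_segment (fst p) (fst q) \<and> snd z \<in> closed_segment (snd p) (snd q)"
proof -
  have rp: "rect_path ps" and hp: "hd ps = p" and lq: "last ps = q" using assms(1) by (auto simp: shortest_rect_path_def)
  have ne: "ps \<noteq> []" using rp by (simp add: rect_path_def)
  have cpq: "short1 p q (cp p (fst q, snd p) q)" "path_len (cp p (fst q, snd p) q) = l1 p q"
    using cp_props[of p "(fst q, snd p)" q] by auto
  have "shortest_rect_path p q (cp p (fst q, snd p) q)" using cpq(1) by (simp add: short1_def)
  then have "rect_path (cp p (fst q, snd p) q) \<and> hd (cp p (fst q, snd p) q) = p \<and> last (cp p (fst q, snd p) q) = q"
    by (simp add: shortest_rect_path_def)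
  then have "path_len ps \<le> path_len (cp p (fst q, snd p) q)" using assms(1) unfolding shortest_rect_path_def by blast
  then have tight: "path_len ps \<le> l1 p q" using cpq(2) by simp
  have "l1 p z + l1 z q \<le> l1 p q" using box_len[OF ne assms(2)] tight hp lq by simp
  then show ?thesis by (rule l1_between)
qed

lemma shortest_ends:
  assumes "shortest_rect_path p q ps" shows "p \<in> path_set ps" "q \<in> path_set ps" "connected (path_set ps)"
proof -
  have rp: "rect_path ps" and hp: "hd ps = p" and lq: "last ps = q" using assms(1) by (auto simp: shortest_rect_path_def)
  have ne: "ps \<noteq> []" using rp by (simp add: rect_path_def)
  show "p \<in> path_set ps" using hp ne set_path_set[of ps] hd_in_set[of ps] by blast
  show "q \<in> path_set ps" using lq ne set_path_set[of ps] last_in_set[of ps] by blast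
  show "connected (path_set ps)" by (rule path_set_connected[OF ne])
qed

lemma rowc_gen:
  assumes "rect_convex W" "u \<in> W" "w \<in> W" "snd u = snd w"
  shows "closed_segment u w \<subseteq> W"
proof
  fix z assume z: "z \<in> closed_segment u w"
  obtain ps where ps: "shortest_rect_path u w ps" "path_set ps \<subseteq> W" using assms(1-3) unfolding rect_convex_def by blast
  have sg: "closed_segment u w = closed_segment (fst u) (fst w) \<times> {snd u}"
    by (rule closed_segment_same_snd[OF assms(4)])
  have zz: "fst z \<in> closed_segment (fst u) (fst w)" "snd z = snd u" using z unfolding sg by auto
  obtain y where y: "y \<in> path_set ps" "fst y = fst z"
    using conn_cover_fst[OF shortest_ends(3)[OF ps(1)] shortest_ends(1,2)[OF ps(1)] zz(1)] by blast
  have "snd y = snd u" using shortest_box[OF ps(1) y(1)] assms(4) by simp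
  then have "y = z" using y zz by (simp add: prod_eq_iff)
  then show "z \<in> W" using y ps(2) by blast
qed

lemma colc_gen:
  assumes "rect_convex W" "u \<in> W" "w \<in> W" "fst u = fst w"
  shows "closed_segment u w \<subseteq> W"
proof
  fix z assume z: "z \<in> closed_segment u w"
  obtain ps where ps: "shortest_rect_path u w ps" "path_set ps \<subseteq> W" using assms(1-3) unfolding rect_convex_def by blast
  have sg: "closed_segment u w = {fst u} \<times> closed_segment (snd u) (snd w)"
    by (rule closed_segment_same_fst[OF assms(4)])
  have zz: "snd z \<in> closed_segment (snd u) (snd w)" "fst z = fst u" using z unfolding sg by auto
  obtain y where y: "y \<in> path_set ps" "snd y = snd z"
    using conn_cover_snd[OF shortest_ends(3)[OF ps(1)] shortest_ends(1,2)[OF ps(1)] zz(1)] by blast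
  have "fst y = fst u" using shortest_box[OF ps(1) y(1)] assms(4) by simp
  then have "y = z" using y zz by (simp add: prod_eq_iff)
  then show "z \<in> W" using y ps(2) by blast
qed


lemma prev_idx:
  assumes "k < n" "n \<ge> 3"
  shows "(k + n - 1) mod n < n" "Suc ((k + n - 1) mod n) mod n = k"
    "(k + n - 1) mod n \<noteq> k" "Suc k mod n \<noteq> k" "(k + n - 1) mod n \<noteq> Suc k mod n"
proof -
  show "(k + n - 1) mod n < n" using assms by simp
  have pk: "(k + n - 1) mod n = (if k = 0 then n - 1 else k - 1)"
  proof (cases "k = 0")
    case True then show ?thesis using assms by simp
  next
    case False
    then have "k + n - 1 = (k - 1) + n" by simp
    then have "(k + n - 1) mod n = (k - 1) mod n" by simp
    then show ?thesis using False assms by simp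
  qed
  have sk: "Suc k mod n = (if k = n - 1 then 0 else Suc k)"
    using assms by (auto simp: mod_Suc)
  show "Suc ((k + n - 1) mod n) mod n = k" using assms unfolding pk by (auto simp: mod_Suc)
  show "(k + n - 1) mod n \<noteq> k" using assms unfolding pk by auto
  show "Suc k mod n \<noteq> k" using assms unfolding sk by auto
  show "(k + n - 1) mod n \<noteq> Suc k mod n" using assms unfolding pk sk by auto
qed

lemma corner_gen:
  assumes sp: "simple_polygon vs" and gp: "general_position vs" and rl: "rectilinear vs"
    and P: "(X, Y) \<in> poly_boundary vs"
    and EX: "(\<forall>v\<in>set vs. X \<le> fst v) \<or> (\<forall>v\<in>set vs. fst v \<le> X)"
    and EY: "(\<forall>v\<in>set vs. Y \<le> snd v) \<or> (\<forall>v\<in>set vs. snd v \<le> Y)"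
  shows "(X, Y) \<in> set vs \<and> (\<exists>e1 e2. e1 \<in> edges vs \<and> e2 \<in> edges vs \<and> seg e1 \<subseteq> {p. fst p = X} \<and>
     seg e2 \<subseteq> {p. snd p = Y} \<and> endpoint_of (X, Y) e1 \<and> endpoint_of (X, Y) e2)"
proof -
  define n where "n = length vs"
  have n3: "n \<ge> 3" and dv: "distinct vs" using sp by (auto simp: simple_polygon_def n_def)
  have D: "\<And>i j. i < n \<Longrightarrow> j < n \<Longrightarrow> i \<noteq> j \<Longrightarrow> vs!i \<noteq> vs!j"
    using dv by (simp add: distinct_conv_nth n_def)
  have nx: "nxt vs i = Suc i mod n" for i by (simp add: nxt_def n_def)
  have nxl: "nxt vs i < n" for i using n3 by (simp add: nx)
  have inE: "(vs!i, vs!nxt vs i) \<in> edges vs" if "i < n" for i using that by (auto simp: edges_def n_def)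
  have redge: "fst (vs!i) = fst (vs!nxt vs i) \<or> snd (vs!i) = snd (vs!nxt vs i)" if "i < n" for i
    using rl[unfolded rectilinear_def, rule_format, OF inE[OF that]] by simp
  obtain i where i: "i < n" "(X, Y) \<in> closed_segment (vs!i) (vs!nxt vs i)" using P by (auto simp: poly_boundary_iff n_def)
  have mem: "vs!j \<in> set vs" if "j < n" for j using that by (simp add: nth_mem n_def)
  have vtx: "(X, Y) = vs!i \<or> (X, Y) = vs!nxt vs i"
  proof (cases "snd (vs!i) = snd (vs!nxt vs i)")
    case True
    have sg: "closed_segment (vs!i) (vs!nxt vs i) = closed_segment (fst (vs!i)) (fst (vs!nxt vs i)) \<times> {snd (vs!i)}"
      by (rule closed_segment_same_snd[OF True])
    have XY: "Y = snd (vs!i)" "X \<in> closed_segment (fst (vs!i)) (fst (vs!nxt vs i))" using i(2) unfolding sg by auto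
    have "X = fst (vs!i) \<or> X = fst (vs!nxt vs i)"
      using XY(2) EX mem[OF i(1)] mem[OF nxl[of i]] by (auto simp: closed_segment_eq_real_ivl split: if_splits)
    then show ?thesis using XY(1) True by (auto simp: prod_eq_iff)
  next
    case False
    then have F: "fst (vs!i) = fst (vs!nxt vs i)" using redge[OF i(1)] by simp
    have sg: "closed_segment (vs!i) (vs!nxt vs i) = {fst (vs!i)} \<times> closed_segment (snd (vs!i)) (snd (vs!nxt vs i))"
      by (rule closed_segment_same_fst[OF F])
    have XY: "X = fst (vs!i)" "Y \<in> closed_segment (snd (vs!i)) (snd (vs!nxt vs i))" using i(2) unfolding sg by auto
    have "Y = snd (vs!i) \<or> Y = snd (vs!nxt vs i)"
      using XY(2) EY mem[OF i(1)] mem[OF nxl[of i]] by (auto simp: closed_segment_eq_real_ivl split: if_splits)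
    then show ?thesis using XY(1) F by (auto simp: prod_eq_iff)
  qed
  obtain k where k: "k < n" "vs!k = (X, Y)"
  proof (cases "(X, Y) = vs!i")
    case True then show ?thesis using that[of i] i(1) by simp
  next
    case False then show ?thesis using that[of "nxt vs i"] vtx nxl[of i] by simp
  qed
  define k0 where "k0 = (k + n - 1) mod n"
  define k1 where "k1 = Suc k mod n"
  have pk: "k0 < n" "nxt vs k0 = k" "k0 \<noteq> k" "k1 \<noteq> k" "k0 \<noteq> k1" "k1 < n" "nxt vs k = k1"
    using prev_idx[OF k(1) n3] n3 by (auto simp: k0_def k1_def nx)
  have dd: "vs!k0 \<noteq> vs!k" "vs!k1 \<noteq> vs!k" "vs!k0 \<noteq> vs!k1"
    using D[OF pk(1) k(1) pk(3)] D[OF pk(6) k(1) pk(4)] D[OF pk(1) pk(6) pk(5)] by auto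
  have e0: "(vs!k0, vs!k) \<in> edges vs" using inE[OF pk(1)] pk(2) by simp
  have e1: "(vs!k, vs!k1) \<in> edges vs" using inE[OF k(1)] pk(7) by simp
  have r0: "fst (vs!k0) = fst (vs!k) \<or> snd (vs!k0) = snd (vs!k)" using redge[OF pk(1)] pk(2) by simp
  have r1: "fst (vs!k) = fst (vs!k1) \<or> snd (vs!k) = snd (vs!k1)" using redge[OF k(1)] pk(7) by simp
  have ncol: "\<not> collinear {vs!k0, vs!k, vs!k1}"
    using gp[unfolded general_position_def, rule_format, OF mem[OF pk(1)] mem[OF k(1)] mem[OF pk(6)]] dd(1,3) dd(2)[THEN not_sym] by blast
  have hv: "(snd (vs!k0) = snd (vs!k) \<and> fst (vs!k) = fst (vs!k1)) \<or> (fst (vs!k0) = fst (vs!k) \<and> snd (vs!k) = snd (vs!k1))"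
  proof -
    have "\<not> (snd (vs!k0) = snd (vs!k) \<and> snd (vs!k) = snd (vs!k1))" using ncol coll_snd[of "vs!k0" "vs!k" "vs!k1"] by blast
    moreover have "\<not> (fst (vs!k0) = fst (vs!k) \<and> fst (vs!k) = fst (vs!k1))" using ncol coll_fst[of "vs!k0" "vs!k" "vs!k1"] by blast
    moreover have "\<not> (fst (vs!k0) = fst (vs!k) \<and> snd (vs!k0) = snd (vs!k))" using dd(1) by (auto simp: prod_eq_iff)
    moreover have "\<not> (fst (vs!k) = fst (vs!k1) \<and> snd (vs!k) = snd (vs!k1))" using dd(2) by (auto simp: prod_eq_iff)
    ultimately show ?thesis using r0 r1 by argo
  qed
  have segH: "seg (u, w) \<subseteq> {p. snd p = Y}" if "snd u = snd w" "snd u = Y \<or> snd w = Y" for u w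
    unfolding seg_def fst_conv snd_conv closed_segment_same_snd[OF that(1)] using that by auto
  have segV: "seg (u, w) \<subseteq> {p. fst p = X}" if "fst u = fst w" "fst u = X \<or> fst w = X" for u w
    unfolding seg_def fst_conv snd_conv closed_segment_same_fst[OF that(1)] using that by auto
  have XYk: "fst (vs!k) = X" "snd (vs!k) = Y" using k(2) by auto
  have ex: "\<exists>e1 e2. e1 \<in> edges vs \<and> e2 \<in> edges vs \<and> seg e1 \<subseteq> {p. fst p = X} \<and>
     seg e2 \<subseteq> {p. snd p = Y} \<and> endpoint_of (X, Y) e1 \<and> endpoint_of (X, Y) e2"
  proof (cases "snd (vs!k0) = snd (vs!k) \<and> fst (vs!k) = fst (vs!k1)")
    case True
    have s1: "seg (vs!k, vs!k1) \<subseteq> {p. fst p = X}" using segV[of "vs!k" "vs!k1"] True XYk by simp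
    have s2: "seg (vs!k0, vs!k) \<subseteq> {p. snd p = Y}" using segH[of "vs!k0" "vs!k"] True XYk by simp
    have p1: "endpoint_of (X, Y) (vs!k, vs!k1)" "endpoint_of (X, Y) (vs!k0, vs!k)"
      using k(2) by (simp_all add: endpoint_of_def)
    show ?thesis using e0 e1 s1 s2 p1 by blast
  next
    case False
    then have T: "fst (vs!k0) = fst (vs!k) \<and> snd (vs!k) = snd (vs!k1)" using hv by blast
    have s1: "seg (vs!k0, vs!k) \<subseteq> {p. fst p = X}" using segV[of "vs!k0" "vs!k"] T XYk by simp
    have s2: "seg (vs!k, vs!k1) \<subseteq> {p. snd p = Y}" using segH[of "vs!k" "vs!k1"] T XYk by simp
    have p1: "endpoint_of (X, Y) (vs!k, vs!k1)" "endpoint_of (X, Y) (vs!k0, vs!k)"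
      using k(2) by (simp_all add: endpoint_of_def)
    show ?thesis using e0 e1 s1 s2 p1 by blast
  qed
  show ?thesis using ex mem[OF k(1)] k(2) by auto
qed

lemma corner_in_boundary:
  assumes "(X, Y) \<in> region vs" "X = xmin vs \<or> X = xmax vs"
  shows "(X, Y) \<in> poly_boundary vs"
proof (rule ccontr)
  assume nb: "(X, Y) \<notin> poly_boundary vs"
  then have "(X, Y) \<in> inside (poly_boundary vs)" using assms(1) region_eq by blast
  moreover have "open (inside (poly_boundary vs))" by (rule open_inside[OF closed_boundary])
  ultimately obtain r where r: "r > 0" "ball (X, Y) r \<subseteq> inside (poly_boundary vs)"
    using open_contains_ball by blast
  have "inside (poly_boundary vs) \<subseteq> Bx vs" using region_Bx region_eq by blast
  moreover have "(X - r/2, Y) \<in> ball (X, Y) r" "(X + r/2, Y) \<in> ball (X, Y) r"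
    using r by (auto simp: mem_ball dist_Pair_Pair dist_real_def)
  ultimately have "(X - r/2, Y) \<in> Bx vs" "(X + r/2, Y) \<in> Bx vs" using r by blast+
  then show False using assms(2) r by (auto simp: Bx_def)
qed

lemma corner_region:
  assumes sp: "simple_polygon vs" and gp: "general_position vs" and rl: "rectilinear vs"
    and R: "(X, Y) \<in> region vs" and X: "X = xmin vs \<or> X = xmax vs" and Y: "Y = ymin vs \<or> Y = ymax vs"
  shows "(X, Y) \<in> set vs \<and> (\<exists>e1 e2. e1 \<in> edges vs \<and> e2 \<in> edges vs \<and> seg e1 \<subseteq> {p. fst p = X} \<and>
     seg e2 \<subseteq> {p. snd p = Y} \<and> endpoint_of (X, Y) e1 \<and> endpoint_of (X, Y) e2)"
proof (rule corner_gen[OF sp gp rl])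
  show "(X, Y) \<in> poly_boundary vs" by (rule corner_in_boundary[OF R X])
  show "(\<forall>v\<in>set vs. X \<le> fst v) \<or> (\<forall>v\<in>set vs. fst v \<le> X)" using X vbounds by blast
  show "(\<forall>v\<in>set vs. Y \<le> snd v) \<or> (\<forall>v\<in>set vs. snd v \<le> Y)" using Y vbounds by blast
qed


fun chain :: "pt list \<Rightarrow> real \<Rightarrow> pt" where
  "chain [] = linepath 0 0"
| "chain [a] = linepath a a"
| "chain [a, b] = linepath a b"
| "chain (a # b # c # r) = linepath a b +++ chain (b # c # r)"

definition PI :: "pt list \<Rightarrow> pt set" where
  "PI ws = (\<Union>i\<in>{i. Suc i < length ws}. closed_segment (ws!i) (ws!Suc i))"

definition AC :: "pt list \<Rightarrow> bool" where
  "AC ws \<longleftrightarrow> (\<forall>i. Suc i < length ws \<longrightarrow> ws!i \<noteq> ws!Suc i) \<and>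
    (\<forall>i j. i < j \<longrightarrow> Suc j < length ws \<longrightarrow>
       closed_segment (ws!i) (ws!Suc i) \<inter> closed_segment (ws!j) (ws!Suc j) \<subseteq> (if j = Suc i then {ws!j} else {}))"

lemma PI_two: "PI [a, b] = closed_segment a b" by (auto simp: PI_def)

lemma PI_cons: "PI (a # b # c # r) = closed_segment a b \<union> PI (b # c # r)"
proof -
  have "{i. Suc i < length (a # b # c # r)} = insert 0 (Suc ` {i. Suc i < length (b # c # r)})"
    by (auto simp: image_iff) (metis Suc_less_eq not0_implies_Suc)
  then show ?thesis unfolding PI_def by simp
qed

lemma chain_ends:
  "length ws \<ge> 2 \<Longrightarrow> pathstart (chain ws) = hd ws \<and> pathfinish (chain ws) = last ws \<and> path_image (chain ws) = PI ws"
proof (induction ws rule: chain.induct)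
  case (4 a b c r)
  then show ?case by (simp add: PI_cons path_image_join)
qed (auto simp: PI_two)

lemma AC_tail: assumes "AC (a # b # c # r)" shows "AC (b # c # r)"
proof -
  let ?L = "a # b # c # r" and ?T = "b # c # r"
  have A1: "\<And>i. Suc i < length ?L \<Longrightarrow> ?L ! i \<noteq> ?L ! Suc i" and
    A2: "\<And>i j. i < j \<Longrightarrow> Suc j < length ?L \<Longrightarrow>
       closed_segment (?L ! i) (?L ! Suc i) \<inter> closed_segment (?L ! j) (?L ! Suc j) \<subseteq> (if j = Suc i then {?L ! j} else {})"
    using assms unfolding AC_def by blast+
  have "?T ! i \<noteq> ?T ! Suc i" if "Suc i < length ?T" for i
  proof -
    have "Suc (Suc i) < length ?L" using that by simp
    from A1[OF this] show ?thesis by (simp only: nth_Cons_Suc not_False_eq_True)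
  qed
  moreover have "closed_segment (?T ! i) (?T ! Suc i) \<inter> closed_segment (?T ! j) (?T ! Suc j) \<subseteq> (if j = Suc i then {?T ! j} else {})"
    if "i < j" "Suc j < length ?T" for i j
  proof -
    have "Suc i < Suc j" "Suc (Suc j) < length ?L" using that by simp_all
    from A2[OF this] show ?thesis by (simp only: nth_Cons_Suc nat.inject)
  qed
  ultimately show ?thesis unfolding AC_def by blast
qed

lemma AC_head: assumes "AC (a # b # c # r)" shows "closed_segment a b \<inter> PI (b # c # r) \<subseteq> {b}" "a \<noteq> b"
proof -
  let ?L = "a # b # c # r" and ?T = "b # c # r"
  have A1: "\<And>i. Suc i < length ?L \<Longrightarrow> ?L ! i \<noteq> ?L ! Suc i" and
    A2: "\<And>i j. i < j \<Longrightarrow> Suc j < length ?L \<Longrightarrow>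
       closed_segment (?L ! i) (?L ! Suc i) \<inter> closed_segment (?L ! j) (?L ! Suc j) \<subseteq> (if j = Suc i then {?L ! j} else {})"
    using assms unfolding AC_def by blast+
  show "closed_segment a b \<inter> PI (b # c # r) \<subseteq> {b}"
  proof
    fix x assume x: "x \<in> closed_segment a b \<inter> PI (b # c # r)"
    then obtain j where j: "Suc j < length ?T" "x \<in> closed_segment (?T ! j) (?T ! Suc j)"
      unfolding PI_def by blast
    have "0 < Suc j" "Suc (Suc j) < length ?L" using j by simp_all
    from A2[OF this] have "closed_segment a b \<inter> closed_segment (?T ! j) (?T ! Suc j) \<subseteq> (if j = 0 then {?T ! j} else {})"
      by (simp only: nth_Cons_Suc nth_Cons_0 nat.inject)
    then have "x \<in> (if j = 0 then {?T ! j} else {})" using x j by blast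
    then show "x \<in> {b}" by (cases "j = 0") simp_all
  qed
  have "Suc 0 < length ?L" by simp
  from A1[OF this] show "a \<noteq> b" by simp
qed

lemma chain_arc: "length ws \<ge> 2 \<Longrightarrow> AC ws \<Longrightarrow> arc (chain ws)"
proof (induction ws rule: chain.induct)
  case (3 a b)
  then have "a \<noteq> b" unfolding AC_def by force
  then show ?case by simp
next
  case (4 a b c r)
  have t: "AC (b # c # r)" using AC_tail[OF "4.prems"(2)] .
  have ih: "arc (chain (b # c # r))" using 4 t by simp
  have e: "pathstart (chain (b # c # r)) = b" "path_image (chain (b # c # r)) = PI (b # c # r)"
    using chain_ends[of "b # c # r"] by auto
  have h: "closed_segment a b \<inter> PI (b # c # r) \<subseteq> {b}" "a \<noteq> b" using AC_head[OF "4.prems"(2)] by auto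
  show ?case unfolding chain.simps
    by (rule arc_join) (use ih e h in auto)
qed auto


lemma sp_inter:
  assumes "simple_polygon vs" "i < length vs" "j < length vs" "i \<noteq> j"
  shows "closed_segment (vs!i) (vs!nxt vs i) \<inter> closed_segment (vs!j) (vs!nxt vs j) \<subseteq>
    (if j = nxt vs i then {vs!j} else if i = nxt vs j then {vs!i} else {})"
  using assms unfolding simple_polygon_def by (auto split: if_splits)

lemma polygon_path:
  assumes sp: "simple_polygon vs"
  obtains g where "simple_path g" "pathfinish g = pathstart g" "path_image g = poly_boundary vs"
proof -
  define n where "n = length vs"
  have n3: "n \<ge> 3" and dv: "distinct vs" using sp by (auto simp: simple_polygon_def n_def)
  have D: "\<And>i j. i < n \<Longrightarrow> j < n \<Longrightarrow> i \<noteq> j \<Longrightarrow> vs!i \<noteq> vs!j"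
    using dv by (simp add: distinct_conv_nth n_def)
  have nx: "nxt vs i = Suc i mod n" for i by (simp add: nxt_def n_def)
  have nxS: "nxt vs k = Suc k" if "Suc k < n" for k using that by (simp add: nx)
  have nxL: "nxt vs (n - 1) = 0" using n3 by (simp add: nx)
  have nxl: "nxt vs k < n" for k using n3 by (simp add: nx)
  define E where "E j = closed_segment (vs!j) (vs!nxt vs j)" for j
  define ws where "ws = map (\<lambda>k. vs ! nxt vs k) [0..<n]"
  have lw: "length ws = n" by (simp add: ws_def)
  have wsk: "ws!k = vs!nxt vs k" if "k < n" for k using that by (simp add: ws_def)
  have wsS: "ws!k = vs!Suc k" if "Suc k < n" for k using wsk[of k] nxS[OF that] that by simp
  have segk: "closed_segment (ws!k) (ws!Suc k) = E (Suc k)" if "Suc k < n" for k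
    using wsS[OF that] wsk[of "Suc k"] that by (simp add: E_def)
  have wne: "ws \<noteq> []" using lw n3 by auto
  have hdw: "hd ws = vs!1" using n3 wsk[of 0] nxS[of 0] hd_conv_nth[OF wne] by simp
  have lastw: "last ws = vs!0" using n3 wsk[of "n - 1"] nxL lw last_conv_nth[OF wne] by simp
  have PIw: "PI ws = (\<Union>k\<in>{k. Suc k < n}. E (Suc k))" unfolding PI_def lw using segk by auto
  have pb: "poly_boundary vs = E 0 \<union> PI ws"
  proof -
    have "poly_boundary vs = (\<Union>j<n. E j)" by (simp add: pb_UN E_def n_def)
    also have "\<dots> = E 0 \<union> (\<Union>k\<in>{k. Suc k < n}. E (Suc k))"
    proof
      show "(\<Union>j<n. E j) \<subseteq> E 0 \<union> (\<Union>k\<in>{k. Suc k < n}. E (Suc k))"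
      proof
        fix x assume "x \<in> (\<Union>j<n. E j)"
        then obtain j where j: "j < n" "x \<in> E j" by auto
        show "x \<in> E 0 \<union> (\<Union>k\<in>{k. Suc k < n}. E (Suc k))"
        proof (cases j)
          case 0 then show ?thesis using j by simp
        next
          case (Suc k) then show ?thesis using j by auto
        qed
      qed
      have "0 \<in> {..<n}" using n3 by simp
      then show "E 0 \<union> (\<Union>k\<in>{k. Suc k < n}. E (Suc k)) \<subseteq> (\<Union>j<n. E j)" by blast
    qed
    finally show ?thesis using PIw by simp
  qed
  have SPI: "E i \<inter> E j \<subseteq> (if j = nxt vs i then {vs!j} else if i = nxt vs j then {vs!i} else {})"
    if "i < n" "j < n" "i \<noteq> j" for i j
    using sp_inter[OF sp, of i j] that by (simp add: E_def n_def)
  have ACw: "AC ws"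
    unfolding AC_def lw
  proof (intro conjI allI impI)
    fix i assume i: "Suc i < n"
    have "nxt vs (Suc i) \<noteq> Suc i"
    proof (cases "Suc (Suc i) < n")
      case True then show ?thesis using nxS[OF True] by simp
    next
      case False then have "Suc (Suc i) = n" using i by simp
      then show ?thesis by (simp add: nx)
    qed
    then show "ws ! i \<noteq> ws ! Suc i" using wsS[OF i] wsk[of "Suc i"] i D[OF _ nxl] by auto
  next
    fix i j assume ij: "i < j" "Suc j < n"
    have I: "Suc i < n" using ij by simp
    have c1: "(Suc j = nxt vs (Suc i)) = (j = Suc i)"
    proof (cases "Suc (Suc i) < n")
      case True then show ?thesis using nxS[OF True] by simp
    next
      case False then show ?thesis using ij by simp
    qed
    have c2: "Suc i \<noteq> nxt vs (Suc j)"
    proof (cases "Suc (Suc j) < n")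
      case True then show ?thesis using nxS[OF True] ij by simp
    next
      case False then have "Suc (Suc j) = n" using ij by simp
      then have "nxt vs (Suc j) = 0" by (simp add: nx)
      then show ?thesis by simp
    qed
    have "E (Suc i) \<inter> E (Suc j) \<subseteq> (if j = Suc i then {vs!Suc j} else {})"
      using SPI[OF I ij(2)] ij c1 c2 by (auto split: if_splits)
    then show "closed_segment (ws ! i) (ws ! Suc i) \<inter> closed_segment (ws ! j) (ws ! Suc j) \<subseteq> (if j = Suc i then {ws ! j} else {})"
      using segk[OF I] segk[OF ij(2)] wsS[of j] ij by auto
  qed
  have lw2: "length ws \<ge> 2" using lw n3 by simp
  have ce: "pathstart (chain ws) = vs!1" "pathfinish (chain ws) = vs!0" "path_image (chain ws) = PI ws"
    using chain_ends[OF lw2] hdw lastw by auto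
  have arc2: "arc (chain ws)" by (rule chain_arc[OF lw2 ACw])
  have d01: "vs!0 \<noteq> vs!1" using D[of 0 1] n3 by simp
  have n1: "nxt vs 0 = 1" using n3 by (simp add: nx)
  have int: "closed_segment (vs!0) (vs!1) \<inter> PI ws \<subseteq> {vs!0, vs!1}"
  proof
    fix x assume x: "x \<in> closed_segment (vs!0) (vs!1) \<inter> PI ws"
    then obtain k where k: "Suc k < n" "x \<in> E (Suc k)" "x \<in> E 0" unfolding PIw by (auto simp: E_def n1)
    have "E 0 \<inter> E (Suc k) \<subseteq> (if Suc k = nxt vs 0 then {vs!Suc k} else if 0 = nxt vs (Suc k) then {vs!0} else {})"
      by (rule SPI) (use k(1) n3 in auto)
    then have "x \<in> (if Suc k = nxt vs 0 then {vs!Suc k} else if 0 = nxt vs (Suc k) then {vs!0} else {})"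
      using k(2,3) by blast
    then show "x \<in> {vs!0, vs!1}" using n1 by (auto split: if_splits)
  qed
  have sg: "simple_path (linepath (vs!0) (vs!1) +++ chain ws)"
    by (rule simple_path_join_loop) (use arc2 ce d01 int in auto)
  have pi: "path_image (linepath (vs!0) (vs!1) +++ chain ws) = poly_boundary vs"
    using ce pb by (simp add: path_image_join E_def n1)
  have cl: "pathfinish (linepath (vs!0) (vs!1) +++ chain ws) = pathstart (linepath (vs!0) (vs!1) +++ chain ws)"
    using ce by simp
  show ?thesis using that sg cl pi by blast
qed


lemma boundary_approx:
  assumes sp: "simple_polygon vs" and x: "x \<in> poly_boundary vs" and e: "e > 0"
  shows "\<exists>y\<in>interior (region vs). dist y x < e"
proof -
  obtain g where g: "simple_path g" "pathfinish g = pathstart g" "path_image g = poly_boundary vs"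
    using polygon_path[OF sp] by blast
  let ?S = "poly_boundary vs"
  have h1: "?S homeomorphic sphere (0::complex) 1"
    using homeomorphic_simple_path_image_circle[OF g(1) g(2), of 1 0] g(3) by simp
  have h2: "sphere (0::complex) 1 homeomorphic sphere (0::pt) 1"
    by (rule homeomorphic_spheres_gen) auto
  have hom: "?S homeomorphic sphere (0::pt) 1" using homeomorphic_trans[OF h1 h2] .
  have nc: "\<not> connected (- ?S)" using Jordan_Brouwer_separation[OF hom] by simp
  have cS: "compact ?S" using compact_path_image[OF simple_path_imp_path[OF g(1)]] g(3) by simp
  have "bounded (- (- ?S))" using compact_imp_bounded[OF cS] by simp
  then obtain C where C: "C \<in> components (- ?S)" "bounded C"
    using cobounded_has_bounded_component[of "- ?S"] nc by auto
  have fr: "frontier C = ?S" using Jordan_Brouwer_frontier[OF hom C(1)] by simp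
  have oC: "open C" using open_components[OF _ C(1)] compact_imp_closed[OF cS] by auto
  have Cin: "C \<subseteq> inside ?S"
  proof
    fix y assume y: "y \<in> C"
    obtain z where z: "z \<in> - ?S" "C = connected_component_set (- ?S) z" using C(1) by (auto simp: components_iff)
    then have "C = connected_component_set (- ?S) y" using y connected_component_eq by fastforce
    moreover have "y \<in> - ?S" using y z connected_component_subset by blast
    ultimately show "y \<in> inside ?S" using C(2) by (auto simp: inside_def)
  qed
  have "C \<subseteq> region vs" using Cin region_eq by blast
  then have Cint: "C \<subseteq> interior (region vs)" using oC interior_maximal by blast
  have "x \<in> closure C" using x fr by (auto simp: frontier_def)
  then obtain y where "y \<in> C" "dist y x < e" using e closure_approachable by blast
  then show ?thesis using Cint by blast
qed


lemma mk_corner: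
  assumes sp: "simple_polygon vs" and gp: "general_position vs" and rl: "rectilinear vs"
  shows "(xmin vs, ymin vs) \<in> region vs \<Longrightarrow> corner_of vs left_edge bottom_edge (xmin vs, ymin vs)"
    "(xmax vs, ymin vs) \<in> region vs \<Longrightarrow> corner_of vs right_edge bottom_edge (xmax vs, ymin vs)"
    "(xmin vs, ymax vs) \<in> region vs \<Longrightarrow> corner_of vs left_edge top_edge (xmin vs, ymax vs)"
    "(xmax vs, ymax vs) \<in> region vs \<Longrightarrow> corner_of vs right_edge top_edge (xmax vs, ymax vs)"
proof -
  assume R: "(xmin vs, ymin vs) \<in> region vs"
  show "corner_of vs left_edge bottom_edge (xmin vs, ymin vs)"
    using corner_region[OF sp gp rl R] unfolding corner_of_def left_edge_def bottom_edge_def by blast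
next
  assume R: "(xmax vs, ymin vs) \<in> region vs"
  show "corner_of vs right_edge bottom_edge (xmax vs, ymin vs)"
    using corner_region[OF sp gp rl R] unfolding corner_of_def right_edge_def bottom_edge_def by blast
next
  assume R: "(xmin vs, ymax vs) \<in> region vs"
  show "corner_of vs left_edge top_edge (xmin vs, ymax vs)"
    using corner_region[OF sp gp rl R] unfolding corner_of_def left_edge_def top_edge_def by blast
next
  assume R: "(xmax vs, ymax vs) \<in> region vs"
  show "corner_of vs right_edge top_edge (xmax vs, ymax vs)"
    using corner_region[OF sp gp rl R] unfolding corner_of_def right_edge_def top_edge_def by blast
qed

lemma edge_in_boundary: "e \<in> edges vs \<Longrightarrow> z \<in> seg e \<Longrightarrow> z \<in> poly_boundary vs"
  by (auto simp: poly_boundary_def)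

lemma lim_le: fixes m y0 :: real assumes "\<And>e. e > 0 \<Longrightarrow> m < y0 + e" shows "m \<le> y0"
proof (rule ccontr)
  assume "\<not> m \<le> y0"
  then have "m - y0 > 0" by simp
  from assms[OF this] show False by simp
qed

theorem lemma6:
  fixes vs :: "(real \<times> real) list" and a b c d :: "real \<times> real"
  assumes "simple_polygon vs"
    and "general_position vs"
    and "rectilinear vs"
    and "rect_convex (region vs)"
    and "\<not> has_diagonal vs"
    and "is_cross vs a b c d"
  shows "min_skeleton (region vs) {closed_segment a b, closed_segment c d}"
proof -
  note sp = assms(1) and gp = assms(2) and rl = assms(3)
  define W where "W = region vs"
  obtain e1 e2 e3 e4 where cr: "closed_segment a b \<subseteq> W" "closed_segment c d \<subseteq> W"
    "bottom_edge vs e1" "a \<in> seg e1" "top_edge vs e2" "b \<in> seg e2"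
    "left_edge vs e3" "c \<in> seg e3" "right_edge vs e4" "d \<in> seg e4"
    using assms(6) unfolding is_cross_def W_def by blast
  have ya: "snd a = ymin vs" using cr(3,4) by (auto simp: bottom_edge_def)
  have yb: "snd b = ymax vs" using cr(5,6) by (auto simp: top_edge_def)
  have xc: "fst c = xmin vs" using cr(7,8) by (auto simp: left_edge_def)
  have xd: "fst d = xmax vs" using cr(9,10) by (auto simp: right_edge_def)
  have aB: "a \<in> poly_boundary vs" using edge_in_boundary[of e1 vs a] cr(3,4) by (simp add: bottom_edge_def)
  have bB: "b \<in> poly_boundary vs" using edge_in_boundary[of e2 vs b] cr(5,6) by (simp add: top_edge_def)
  have cB: "c \<in> poly_boundary vs" using edge_in_boundary[of e3 vs c] cr(7,8) by (simp add: left_edge_def)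
  have dB: "d \<in> poly_boundary vs" using edge_in_boundary[of e4 vs d] cr(9,10) by (simp add: right_edge_def)
  have mm: "xmin vs < xmax vs" "ymin vs < ymax vs" using minmax_strict[OF sp gp] by auto
  have boxW: "xmin vs \<le> fst z \<and> fst z \<le> xmax vs \<and> ymin vs \<le> snd z \<and> snd z \<le> ymax vs" if "z \<in> W" for z
    using region_Bx[of vs] that unfolding W_def Bx_def by (auto simp: mem_Times_iff)
  interpret cs W a b c d "xmin vs" "xmax vs" "ymin vs" "ymax vs"
  proof
    show "\<And>z. z \<in> W \<Longrightarrow> xmin vs \<le> fst z \<and> fst z \<le> xmax vs \<and> ymin vs \<le> snd z \<and> snd z \<le> ymax vs" by (rule boxW)
    show "ymin vs < ymax vs" "xmin vs < xmax vs" using mm by auto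
    show "\<And>u w. u \<in> W \<Longrightarrow> w \<in> W \<Longrightarrow> snd u = snd w \<Longrightarrow> closed_segment u w \<subseteq> W"
      using rowc_gen[OF assms(4)] unfolding W_def by blast
    show "\<And>u w. u \<in> W \<Longrightarrow> w \<in> W \<Longrightarrow> fst u = fst w \<Longrightarrow> closed_segment u w \<subseteq> W"
      using colc_gen[OF assms(4)] unfolding W_def by blast
  qed (use ya yb xc xd cr(1,2) in auto)
  have ab: "a \<noteq> b" using ya yb mm by auto
  have cd: "c \<noteq> d" using xc xd mm by auto
  have sk: "skeleton W {closed_segment a b, closed_segment c d}"
    unfolding skeleton_def
  proof (intro conjI allI impI)
    have "is_segment (closed_segment a b)" "is_segment (closed_segment c d)"
      unfolding is_segment_def using ab cd by blast+
    then show "\<forall>s\<in>{closed_segment a b, closed_segment c d}. is_segment s" by blast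
    show "\<Union>{closed_segment a b, closed_segment c d} \<subseteq> W" using cr(1,2) by auto
  next
    fix p q ps
    assume H: "p \<notin> interior W \<and> q \<notin> interior W \<and> (\<forall>ps. short1 p q ps \<longrightarrow> path_set ps \<inter> interior W \<noteq> {})"
      and s1: "short1 p q ps"
    show "\<exists>s\<in>{closed_segment a b, closed_segment c d}. path_set ps \<inter> s \<noteq> {}"
      using skel[of p q ps] H s1 by blast
  qed
  have minimal: "card {closed_segment a b, closed_segment c d} \<le> card S'" if S': "skeleton W S'" "finite S'" for S'
  proof (rule ccontr)
    assume "\<not> ?thesis"
    moreover have "card {closed_segment a b, closed_segment c d} \<le> 2" by (simp add: card_insert_if)
    ultimately have c1: "card S' \<le> 1" by simp
    have P: "\<And>p q. p \<notin> interior W \<Longrightarrow> q \<notin> interior W \<Longrightarrow> (\<forall>ps. short1 p q ps \<longrightarrow> path_set ps \<inter> interior W \<noteq> {})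
       \<Longrightarrow> (\<forall>ps. short1 p q ps \<longrightarrow> (\<exists>s\<in>S'. path_set ps \<inter> s \<noteq> {}))"
      using S'(1) unfolding skeleton_def by blast
    have segS: "\<forall>s\<in>S'. is_segment s" "\<Union>S' \<subseteq> W" using S'(1) unfolding skeleton_def by auto
    obtain z0 where z0: "z0 \<in> interior W" using boundary_approx[OF sp aB, of 1] unfolding W_def by auto
    obtain s0 where "s0 \<in> S'" using row_hit[OF z0 P] by blast
    moreover have "\<forall>x1\<in>S'. \<forall>x2\<in>S'. x1 = x2" using c1 S'(2) card_le_Suc0_iff_eq[of S'] by simp
    ultimately have S1: "S' = {s0}" by blast
    have "is_segment s0" using segS(1) S1 by blast
    then obtain u w0 where uw: "u \<noteq> w0" "s0 = closed_segment u w0" unfolding is_segment_def by blast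
    have "s0 \<subseteq> W" using segS(2) S1 by blast
    then have s0W: "closed_segment u w0 \<subseteq> W" using uw(2) by simp
    have uW: "u \<in> W" "w0 \<in> W" using s0W ends_in_segment[of u w0] by blast+
    have hit_row: "\<exists>w\<in>closed_segment u w0. snd w = snd z" if zi: "z \<in> interior W" for z
    proof -
      obtain s w where "s \<in> S'" "w \<in> s" "snd w = snd z" using row_hit[OF zi P] by blast
      then show ?thesis using S1 uw(2) by blast
    qed
    have hit_col: "\<exists>w\<in>closed_segment u w0. fst w = fst z" if zi: "z \<in> interior W" for z
    proof -
      obtain s w where "s \<in> S'" "w \<in> s" "fst w = fst z" using col_hit[OF zi P] by blast
      then show ?thesis using S1 uw(2) by blast
    qed
    have near: "\<exists>z\<in>interior W. dist z x < e" if "x \<in> poly_boundary vs" "e > 0" for x e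
      using boundary_approx[OF sp that] by (simp add: W_def)
    have rng: "snd w \<in> closed_segment (snd u) (snd w0)" "fst w \<in> closed_segment (fst u) (fst w0)"
      if "w \<in> closed_segment u w0" for w using seg_coords[OF that] by auto
    have L1: "min (snd u) (snd w0) \<le> ymin vs"
    proof (rule lim_le)
      fix e :: real assume "e > 0"
      then obtain z where z: "z \<in> interior W" "dist z a < e" using near[OF aB] by blast
      obtain w where w: "w \<in> closed_segment u w0" "snd w = snd z" using hit_row[OF z(1)] by blast
      have "\<bar>snd z - snd a\<bar> < e" using dist_snd_le[of z a] z(2) by (simp add: dist_real_def)
      moreover have "min (snd u) (snd w0) \<le> snd w" using rng(1)[OF w(1)] by (auto simp: closed_segment_eq_real_ivl split: if_splits)
      ultimately show "min (snd u) (snd w0) < ymin vs + e" using w(2) ya by linarith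
    qed
    have L2: "- max (snd u) (snd w0) \<le> - ymax vs"
    proof (rule lim_le)
      fix e :: real assume "e > 0"
      then obtain z where z: "z \<in> interior W" "dist z b < e" using near[OF bB] by blast
      obtain w where w: "w \<in> closed_segment u w0" "snd w = snd z" using hit_row[OF z(1)] by blast
      have "\<bar>snd z - snd b\<bar> < e" using dist_snd_le[of z b] z(2) by (simp add: dist_real_def)
      moreover have "snd w \<le> max (snd u) (snd w0)" using rng(1)[OF w(1)] by (auto simp: closed_segment_eq_real_ivl split: if_splits)
      ultimately show "- max (snd u) (snd w0) < - ymax vs + e" using w(2) yb by linarith
    qed
    have L3: "min (fst u) (fst w0) \<le> xmin vs"
    proof (rule lim_le)
      fix e :: real assume "e > 0"
      then obtain z where z: "z \<in> interior W" "dist z c < e" using near[OF cB] by blast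
      obtain w where w: "w \<in> closed_segment u w0" "fst w = fst z" using hit_col[OF z(1)] by blast
      have "\<bar>fst z - fst c\<bar> < e" using dist_fst_le[of z c] z(2) by (simp add: dist_real_def)
      moreover have "min (fst u) (fst w0) \<le> fst w" using rng(2)[OF w(1)] by (auto simp: closed_segment_eq_real_ivl split: if_splits)
      ultimately show "min (fst u) (fst w0) < xmin vs + e" using w(2) xc by linarith
    qed
    have L4: "- max (fst u) (fst w0) \<le> - xmax vs"
    proof (rule lim_le)
      fix e :: real assume "e > 0"
      then obtain z where z: "z \<in> interior W" "dist z d < e" using near[OF dB] by blast
      obtain w where w: "w \<in> closed_segment u w0" "fst w = fst z" using hit_col[OF z(1)] by blast
      have "\<bar>fst z - fst d\<bar> < e" using dist_fst_le[of z d] z(2) by (simp add: dist_real_def)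
      moreover have "fst w \<le> max (fst u) (fst w0)" using rng(2)[OF w(1)] by (auto simp: closed_segment_eq_real_ivl split: if_splits)
      ultimately show "- max (fst u) (fst w0) < - xmax vs + e" using w(2) xd by linarith
    qed
    have bu: "xmin vs \<le> fst u" "fst u \<le> xmax vs" "ymin vs \<le> snd u" "snd u \<le> ymax vs" using boxW[OF uW(1)] by auto
    have bw: "xmin vs \<le> fst w0" "fst w0 \<le> xmax vs" "ymin vs \<le> snd w0" "snd w0 \<le> ymax vs" using boxW[OF uW(2)] by auto
    have YY: "(snd u = ymin vs \<and> snd w0 = ymax vs) \<or> (snd u = ymax vs \<and> snd w0 = ymin vs)"
      using L1 L2 bu bw mm by (auto simp: min_def max_def split: if_splits)
    have XX: "(fst u = xmin vs \<and> fst w0 = xmax vs) \<or> (fst u = xmax vs \<and> fst w0 = xmin vs)"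
      using L3 L4 bu bw mm by (auto simp: min_def max_def split: if_splits)
    have uR: "u \<in> region vs" "w0 \<in> region vs" using uW by (auto simp: W_def)
    have sR1: "closed_segment u w0 \<subseteq> region vs" using s0W by (simp add: W_def)
    have sR2: "closed_segment w0 u \<subseteq> region vs" by (subst closed_segment_commute) (rule sR1)
    note sR = sR1 sR2
    have pu: "u = (fst u, snd u)" "w0 = (fst w0, snd w0)" by simp_all
    have "has_diagonal vs"
      unfolding has_diagonal_def
    proof -
      from XX YY consider
          "fst u = xmin vs" "fst w0 = xmax vs" "snd u = ymin vs" "snd w0 = ymax vs"
        | "fst u = xmin vs" "fst w0 = xmax vs" "snd u = ymax vs" "snd w0 = ymin vs"
        | "fst u = xmax vs" "fst w0 = xmin vs" "snd u = ymin vs" "snd w0 = ymax vs"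
        | "fst u = xmax vs" "fst w0 = xmin vs" "snd u = ymax vs" "snd w0 = ymin vs"
        by blast
      then show "\<exists>v w. ((corner_of vs left_edge bottom_edge v \<and> corner_of vs right_edge top_edge w) \<or>
          (corner_of vs right_edge bottom_edge v \<and> corner_of vs left_edge top_edge w)) \<and> closed_segment v w \<subseteq> region vs"
      proof cases
        case 1
        then have eqs: "u = (xmin vs, ymin vs)" "w0 = (xmax vs, ymax vs)" by (simp_all add: prod_eq_iff)
        have "corner_of vs left_edge bottom_edge u"
          using mk_corner(1)[OF sp gp rl] uR eqs by simp
        moreover have "corner_of vs right_edge top_edge w0"
          using mk_corner(4)[OF sp gp rl] uR eqs by simp
        ultimately show ?thesis using sR(1) by blast
      next
        case 2
        then have eqs: "u = (xmin vs, ymax vs)" "w0 = (xmax vs, ymin vs)" by (simp_all add: prod_eq_iff)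
        have "corner_of vs right_edge bottom_edge w0"
          using mk_corner(2)[OF sp gp rl] uR eqs by simp
        moreover have "corner_of vs left_edge top_edge u"
          using mk_corner(3)[OF sp gp rl] uR eqs by simp
        ultimately show ?thesis using sR(2) by blast
      next
        case 3
        then have eqs: "u = (xmax vs, ymin vs)" "w0 = (xmin vs, ymax vs)" by (simp_all add: prod_eq_iff)
        have "corner_of vs right_edge bottom_edge u"
          using mk_corner(2)[OF sp gp rl] uR eqs by simp
        moreover have "corner_of vs left_edge top_edge w0"
          using mk_corner(3)[OF sp gp rl] uR eqs by simp
        ultimately show ?thesis using sR(1) by blast
      next
        case 4
        then have eqs: "u = (xmax vs, ymax vs)" "w0 = (xmin vs, ymin vs)" by (simp_all add: prod_eq_iff)
        have "corner_of vs left_edge bottom_edge w0"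
          using mk_corner(1)[OF sp gp rl] uR eqs by simp
        moreover have "corner_of vs right_edge top_edge u"
          using mk_corner(4)[OF sp gp rl] uR eqs by simp
        ultimately show ?thesis using sR(2) by blast
      qed
    qed
    then show False using assms(5) by simp
  qed
  show ?thesis unfolding min_skeleton_def W_def[symmetric] using sk minimal by auto
qed


end
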